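(* Let $n\ge1$. For $i\ge1$ let $E'_i\in\mathbb{Q}[\mathfrak{S}_n]$ be the sum of all permutations with exactly $i-1$ interior peaks, and $\overline{E}'_i$ the sum of all permutations with exactly $i$ exterior peaks. Then the linear span $\mathfrak{p}_n$ of $E'_1,\dots,E'_{\lfloor (n+1)/2\rfloor}$ and the linear span $\overline{\mathfrak{p}}_n$ of $\overline{E}'_1,\dots,\overline{E}'_{\lfloor (n+1)/2\rfloor}$ are each commutative subalgebras of $\mathbb{Q}[\mathfrak{S}_n]$ of dimension $\lfloor (n+1)/2\rfloor$.
   Context: $\mathfrak{S}_n$ is the symmetric group on $[n]=\{1,\dots,n\}$, with multiplication in $\mathbb{Q}[\mathfrak{S}_n]$ given by composition. For $\pi\in\mathfrak{S}_n$ set $\pi(0)=\pi(n+1)=0$; a position $i\in[n]$ is a peak of $\pi$ if $\pi(i-1)<\pi(i)>\pi(i+1)$. An interior peak is a peak $i$ with $1<i<n$; an exterior peak is any peak $i$ with $1\le i\le n$. *)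

theory Defs
  imports Complex_Main "HOL-Combinatorics.Permutations" "HOL-Library.Function_Algebras"
begin

text \<open>Permutations of [n] are functions nat => nat permuting {1..n} (fixing everything else).
  Elements of Q[S_n] are functions (nat => nat) => rat vanishing outside the permutations of [n].\<close>

definition perms :: "nat \<Rightarrow> (nat \<Rightarrow> nat) set" where
  "perms n = {p. p permutes {1..n}}"

text \<open>Value of pi at position i with the convention pi(0) = pi(n+1) = 0.\<close>
definition pval :: "nat \<Rightarrow> (nat \<Rightarrow> nat) \<Rightarrow> nat \<Rightarrow> nat" where
  "pval n p i = (if 1 \<le> i \<and> i \<le> n then p i else 0)"

definition is_peak :: "nat \<Rightarrow> (nat \<Rightarrow> nat) \<Rightarrow> nat \<Rightarrow> bool" where
  "is_peak n p i \<longleftrightarrow> 1 \<le> i \<and> i \<le> n \<and>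
     pval n p (i - 1) < pval n p i \<and> pval n p i > pval n p (i + 1)"

definition interior_peaks :: "nat \<Rightarrow> (nat \<Rightarrow> nat) \<Rightarrow> nat" where
  "interior_peaks n p = card {i. is_peak n p i \<and> 1 < i \<and> i < n}"

definition exterior_peaks :: "nat \<Rightarrow> (nat \<Rightarrow> nat) \<Rightarrow> nat" where
  "exterior_peaks n p = card {i. is_peak n p i}"

definition E' :: "nat \<Rightarrow> nat \<Rightarrow> ((nat \<Rightarrow> nat) \<Rightarrow> rat)" where
  "E' n i = (\<lambda>p. if p \<in> perms n \<and> interior_peaks n p = i - 1 then 1 else 0)"

definition Ebar' :: "nat \<Rightarrow> nat \<Rightarrow> ((nat \<Rightarrow> nat) \<Rightarrow> rat)" where
  "Ebar' n i = (\<lambda>p. if p \<in> perms n \<and> exterior_peaks n p = i then 1 else 0)"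

text \<open>Product in Q[S_n], multiplication of permutations being composition:
  (a b)(pi) = sum over sigma o tau = pi of a(sigma) b(tau).\<close>
definition gmult :: "nat \<Rightarrow> ((nat \<Rightarrow> nat) \<Rightarrow> rat) \<Rightarrow> ((nat \<Rightarrow> nat) \<Rightarrow> rat) \<Rightarrow> ((nat \<Rightarrow> nat) \<Rightarrow> rat)" where
  "gmult n a b = (\<lambda>\<pi>. if \<pi> \<in> perms n then (\<Sum>\<sigma>\<in>perms n. a \<sigma> * b (inv \<sigma> \<circ> \<pi>)) else 0)"

definition qscale :: "rat \<Rightarrow> ((nat \<Rightarrow> nat) \<Rightarrow> rat) \<Rightarrow> ((nat \<Rightarrow> nat) \<Rightarrow> rat)" where
  "qscale c f = (\<lambda>x. c * f x)"

abbreviation qspan :: "((nat \<Rightarrow> nat) \<Rightarrow> rat) set \<Rightarrow> ((nat \<Rightarrow> nat) \<Rightarrow> rat) set" where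
  "qspan S \<equiv> module.span qscale S"

abbreviation qdim :: "((nat \<Rightarrow> nat) \<Rightarrow> rat) set \<Rightarrow> nat" where
  "qdim S \<equiv> vector_space.dim qscale S"

definition peak_alg :: "nat \<Rightarrow> ((nat \<Rightarrow> nat) \<Rightarrow> rat) set" where
  "peak_alg n = qspan (E' n ` {1..(n + 1) div 2})"

definition peak_alg_ext :: "nat \<Rightarrow> ((nat \<Rightarrow> nat) \<Rightarrow> rat) set" where
  "peak_alg_ext n = qspan (Ebar' n ` {1..(n + 1) div 2})"

text \<open>A (not necessarily unital) commutative subalgebra: a linear subspace closed under
  the product, on which the product is commutative.\<close>
definition comm_subalg :: "nat \<Rightarrow> ((nat \<Rightarrow> nat) \<Rightarrow> rat) set \<Rightarrow> bool" where
  "comm_subalg n A \<longleftrightarrow> module.subspace qscale A \<and>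
     (\<forall>a\<in>A. \<forall>p. p \<notin> perms n \<longrightarrow> a p = 0) \<and>
     (\<forall>a\<in>A. \<forall>b\<in>A. gmult n a b \<in> A \<and> gmult n a b = gmult n b a)"

end

theory Submission
  imports Defs "HOL-Computational_Algebra.Polynomial" "HOL-Library.Product_Lexorder"
begin

interpretation qv: vector_space qscale
  by unfold_locales (auto simp: qscale_def algebra_simps fun_eq_iff)

lemma sum_fun_apply: "(\<Sum>i\<in>I. f i) x = (\<Sum>i\<in>I. f i x)"
  by (induction I rule: infinite_finite_induct) auto

lemma qscale_apply: "qscale c f x = c * f x"
  by (simp add: qscale_def)

lemma gmult_add_left: "gmult n (a + b) c = gmult n a c + gmult n b c"
  by (auto simp: gmult_def fun_eq_iff algebra_simps sum.distrib)
lemma gmult_add_right: "gmult n c (a + b) = gmult n c a + gmult n c b"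
  by (auto simp: gmult_def fun_eq_iff algebra_simps sum.distrib)
lemma gmult_scale_left: "gmult n (qscale r a) c = qscale r (gmult n a c)"
  by (auto simp: gmult_def fun_eq_iff algebra_simps sum_distrib_left qscale_apply)
lemma gmult_scale_right: "gmult n c (qscale r a) = qscale r (gmult n c a)"
  by (auto simp: gmult_def fun_eq_iff algebra_simps sum_distrib_left qscale_apply)
lemma gmult_zero_left: "gmult n 0 c = 0"
  by (auto simp: gmult_def fun_eq_iff)
lemma gmult_zero_right: "gmult n c 0 = 0"
  by (auto simp: gmult_def fun_eq_iff)

lemma bilinear_span_closed:
  assumes A: "qv.subspace A"
    and gen: "\<And>x y. x \<in> S \<Longrightarrow> y \<in> S \<Longrightarrow> gmult n x y \<in> A"
    and a: "a \<in> qv.span S" and b: "b \<in> qv.span S"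
  shows "gmult n a b \<in> A"
proof -
  have step1: "gmult n x b \<in> A" if x: "x \<in> S" for x
    using b
  proof (induction rule: qv.span_induct)
    case base
    show ?case using A unfolding qv.subspace_def
      by (auto simp: gmult_add_right gmult_scale_right gmult_zero_right)
  next
    case (step y) then show ?case using gen x by auto
  qed
  show ?thesis using a
  proof (induction rule: qv.span_induct)
    case base
    show ?case using A unfolding qv.subspace_def
      by (auto simp: gmult_add_left gmult_scale_left gmult_zero_left)
  next
    case (step y) then show ?case using step1 by auto
  qed
qed

lemma bilinear_span_comm:
  assumes gen: "\<And>x y. x \<in> S \<Longrightarrow> y \<in> S \<Longrightarrow> gmult n x y = gmult n y x"
    and a: "a \<in> qv.span S" and b: "b \<in> qv.span S"
  shows "gmult n a b = gmult n b a"
proof -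
  have step1: "gmult n x b = gmult n b x" if x: "x \<in> S" for x
    using b
  proof (induction rule: qv.span_induct)
    case base
    show ?case unfolding qv.subspace_def
      by (auto simp: gmult_add_right gmult_scale_right gmult_zero_right
          gmult_add_left gmult_scale_left gmult_zero_left)
  next
    case (step y) then show ?case using gen x by auto
  qed
  show ?thesis using a
  proof (induction rule: qv.span_induct)
    case base
    show ?case unfolding qv.subspace_def
      by (auto simp: gmult_add_right gmult_scale_right gmult_zero_right
          gmult_add_left gmult_scale_left gmult_zero_left)
  next
    case (step y) then show ?case using step1 by auto
  qed
qed

lemma abstract_alg:
  fixes n m :: nat and \<kappa> :: "(nat\<Rightarrow>nat) \<Rightarrow> nat" and G :: "nat \<Rightarrow> nat \<Rightarrow> nat"
    and E \<Phi> :: "nat \<Rightarrow> (nat \<Rightarrow> nat) \<Rightarrow> rat"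
  assumes E_def: "\<And>i. E i = (\<lambda>\<pi>. if \<pi> \<in> perms n \<and> \<kappa> \<pi> = i then 1 else 0)"
    and \<Phi>_def: "\<And>k. \<Phi> k = (\<lambda>\<pi>. if \<pi> \<in> perms n then of_nat (G k (\<kappa> \<pi> - 1)) else 0)"
    and \<kappa>_range: "\<And>\<pi>. \<pi> \<in> perms n \<Longrightarrow> 1 \<le> \<kappa> \<pi> \<and> \<kappa> \<pi> \<le> m"
    and nonempty: "\<And>i. 1 \<le> i \<Longrightarrow> i \<le> m \<Longrightarrow> \<exists>\<pi>\<in>perms n. \<kappa> \<pi> = i"
    and G_zero: "\<And>k j. k \<le> j \<Longrightarrow> G k j = 0"
    and G_pos: "\<And>k. 1 \<le> k \<Longrightarrow> G k (k-1) > 0"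
    and mult: "\<And>k l. 1 \<le> k \<Longrightarrow> 1 \<le> l \<Longrightarrow> gmult n (\<Phi> k) (\<Phi> l) = \<Phi> (2*k*l)"
  shows "comm_subalg n (qspan (E ` {1..m})) \<and> qdim (qspan (E ` {1..m})) = m"
proof -
  let ?A = "qspan (E ` {1..m})"
  have Phi_sum: "\<Phi> k = (\<Sum>j\<in>{1..m}. qscale (of_nat (G k (j-1))) (E j))" for k
  proof (rule ext)
    fix \<pi>
    show "\<Phi> k \<pi> = (\<Sum>j\<in>{1..m}. qscale (of_nat (G k (j-1))) (E j)) \<pi>"
    proof (cases "\<pi> \<in> perms n")
      case True
      then have r: "\<kappa> \<pi> \<in> {1..m}" using \<kappa>_range by auto
      have "(\<Sum>i\<in>{1..m}. qscale (of_nat (G k (i-1))) (E i)) \<pi>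
          = (\<Sum>i\<in>{1..m}. if i = \<kappa> \<pi> then of_nat (G k (i-1)) else 0)"
        unfolding sum_fun_apply using True by (intro sum.cong) (auto simp: E_def qscale_apply)
      also have "\<dots> = of_nat (G k (\<kappa> \<pi> - 1))"
        using r by (simp add: sum.delta')
      finally show ?thesis using True by (simp add: \<Phi>_def)
    next
      case False
      then show ?thesis unfolding sum_fun_apply by (simp add: \<Phi>_def E_def qscale_apply)
    qed
  qed
  have Phi_in: "\<Phi> k \<in> ?A" for k
    unfolding Phi_sum
    by (intro qv.span_sum qv.span_scale qv.span_base) auto
  have E_in: "E i \<in> qspan (\<Phi> ` {1..m})" if "1 \<le> i" "i \<le> m" for i
    using that
  proof (induction i rule: less_induct)
    case (less i)
    have split: "{1..m} = insert i ({1..<i} \<union> {i<..m})" using less.prems by auto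
    have z: "(\<Sum>j\<in>{i<..m}. qscale (of_nat (G i (j-1))) (E j)) = 0"
      by (intro sum.neutral) (auto simp: G_zero qscale_def fun_eq_iff)
    have "\<Phi> i = qscale (of_nat (G i (i-1))) (E i) + (\<Sum>j\<in>{1..<i}. qscale (of_nat (G i (j-1))) (E j))"
    proof -
      have u: "(\<Sum>j\<in>{1..<i} \<union> {i<..m}. qscale (of_nat (G i (j-1))) (E j))
          = (\<Sum>j\<in>{1..<i}. qscale (of_nat (G i (j-1))) (E j)) + (\<Sum>j\<in>{i<..m}. qscale (of_nat (G i (j-1))) (E j))"
        by (rule sum.union_disjoint) auto
      show ?thesis unfolding Phi_sum split
        by (subst sum.insert) (simp_all only: u z, auto)
    qed
    then have eq: "E i = qscale (1 / of_nat (G i (i-1))) (\<Phi> i - (\<Sum>j\<in>{1..<i}. qscale (of_nat (G i (j-1))) (E j)))"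
      using G_pos[of i] less.prems by (auto simp: fun_eq_iff qscale_def)
    have "(\<Sum>j\<in>{1..<i}. qscale (of_nat (G i (j-1))) (E j)) \<in> qspan (\<Phi> ` {1..m})"
      using less by (intro qv.span_sum qv.span_scale) auto
    moreover have "\<Phi> i \<in> qspan (\<Phi> ` {1..m})" using less.prems by (intro qv.span_base) auto
    ultimately show ?case unfolding eq by (intro qv.span_scale qv.span_diff)
  qed
  have A_eq: "?A = qspan (\<Phi> ` {1..m})"
    unfolding qv.span_eq using E_in Phi_in by auto
  have sub: "qv.subspace ?A" by simp
  have vanish: "\<forall>a\<in>?A. \<forall>p. p \<notin> perms n \<longrightarrow> a p = 0"
  proof
    fix a assume "a \<in> ?A"
    then show "\<forall>p. p \<notin> perms n \<longrightarrow> a p = 0"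
    proof (induction rule: qv.span_induct)
      case base show ?case by (auto simp: qv.subspace_def qscale_apply)
    next
      case (step x) then show ?case by (auto simp: E_def)
    qed
  qed
  have closed: "gmult n a b \<in> ?A" if "a \<in> ?A" "b \<in> ?A" for a b
    by (rule bilinear_span_closed[OF sub _ that[unfolded A_eq], where n=n]) (use Phi_in in \<open>auto simp: mult\<close>)
  have comm: "gmult n a b = gmult n b a" if "a \<in> ?A" "b \<in> ?A" for a b
  proof (rule bilinear_span_comm[OF _ that[unfolded A_eq], where n=n])
    fix x y assume "x \<in> \<Phi> ` {1..m}" "y \<in> \<Phi> ` {1..m}"
    then obtain k l where "x = \<Phi> k" "y = \<Phi> l" "1 \<le> k" "1 \<le> l" by auto
    then show "gmult n x y = gmult n y x" using mult by (simp add: mult_ac)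
  qed
  have inj: "inj_on E {1..m}"
  proof (rule inj_onI)
    fix i j assume ij: "i \<in> {1..m}" "j \<in> {1..m}" "E i = E j"
    obtain \<pi> where "\<pi> \<in> perms n" "\<kappa> \<pi> = i" using nonempty ij by auto
    then show "i = j" using fun_cong[OF ij(3), of \<pi>] by (auto simp: E_def split: if_splits)
  qed
  have indep: "qv.independent (E ` {1..m})"
  proof (rule qv.independent_if_scalars_zero)
    show "finite (E ` {1..m})" by simp
  next
    fix f x
    assume s: "(\<Sum>x\<in>E ` {1..m}. qscale (f x) x) = 0" and x: "x \<in> E ` {1..m}"
    then obtain i where i: "i \<in> {1..m}" "x = E i" by auto
    obtain \<pi> where p: "\<pi> \<in> perms n" "\<kappa> \<pi> = i" using nonempty i by auto
    have "0 = (\<Sum>x\<in>E ` {1..m}. qscale (f x) x) \<pi>" using s by simp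
    also have "\<dots> = (\<Sum>j\<in>{1..m}. f (E j) * E j \<pi>)"
      unfolding sum_fun_apply by (subst sum.reindex[OF inj]) (simp add: qscale_apply)
    also have "\<dots> = (\<Sum>j\<in>{1..m}. if j = i then f (E j) else 0)"
      using p by (intro sum.cong) (auto simp: E_def)
    also have "\<dots> = f (E i)" using i by (simp add: sum.delta')
    finally show "f x = 0" using i by simp
  qed
  have "qdim ?A = card (E ` {1..m})"
    using qv.dim_span_eq_card_independent[OF indep] .
  also have "\<dots> = m" using card_image[OF inj] by simp
  finally show ?thesis
    unfolding comm_subalg_def using sub vanish closed comm by blast
qed

fun pc :: "bool list \<Rightarrow> nat" where
  "pc (False # True # r) = Suc (pc r)"
| "pc (x # r) = pc r"
| "pc [] = 0"

definition vstep :: "bool list \<Rightarrow> bool \<Rightarrow> nat \<Rightarrow> nat \<Rightarrow> bool" where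
  "vstep L g a b \<longleftrightarrow> a < b \<or> (a = b \<and> (L ! a \<longleftrightarrow> \<not> g))"

fun cnt :: "bool list \<Rightarrow> bool list \<Rightarrow> nat \<Rightarrow> nat" where
  "cnt L [] l = 1"
| "cnt L (g # d) l = (\<Sum>l'<length L. if vstep L g l l' then cnt L d l' else 0)"

definition Valph :: "nat \<Rightarrow> bool list" where
  "Valph m = map odd [0..<2*m]"

definition lc :: "bool \<Rightarrow> bool \<Rightarrow> bool \<Rightarrow> bool" where
  "lc s s' g \<longleftrightarrow> (s = s' \<and> (s \<longleftrightarrow> \<not> g)) \<or> (\<not> s \<and> s')"

abbreviation X :: "nat poly" where "X \<equiv> monom 1 1"

fun Qp :: "bool \<Rightarrow> bool list \<Rightarrow> nat poly" where
  "Qp s [] = 1"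
| "Qp s (g # d) = X * (Qp False d + Qp True d)
     + (if lc s False g then Qp False d else 0) + (if lc s True g then Qp True d else 0)"

definition QF :: "bool list \<Rightarrow> nat poly" where
  "QF d = Qp False d + Qp True d"

definition wt :: "(nat \<Rightarrow> nat) \<Rightarrow> nat poly \<Rightarrow> nat" where
  "wt h p = (\<Sum>s\<le>degree p. h s * coeff p s)"

lemma wt_bound: "degree p \<le> N \<Longrightarrow> wt h p = (\<Sum>s\<le>N. h s * coeff p s)"
  unfolding wt_def
  by (rule sum.mono_neutral_left) (auto simp: coeff_eq_0)

lemma wt_add: "wt h (p + q) = wt h p + wt h q"
proof -
  let ?N = "max (degree p) (degree q)"
  have "degree (p + q) \<le> ?N" by (rule degree_add_le) auto
  then show ?thesis
    by (simp add: wt_bound[of _ ?N] sum.distrib algebra_simps)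
qed

lemma wt_zero[simp]: "wt h 0 = 0" by (simp add: wt_def)

lemma wt_one[simp]: "wt h 1 = h 0" by (simp add: wt_def)

lemma wt_X: "wt h (X * p) = wt (\<lambda>s. h (Suc s)) p"
proof -
  have d: "degree (X * p) \<le> Suc (degree p)"
    using degree_mult_le[of X p] by (simp add: degree_monom_eq)
  have "wt h (X * p) = (\<Sum>s\<le>Suc (degree p). h s * coeff (X * p) s)"
    by (rule wt_bound[OF d])
  also have "\<dots> = (\<Sum>s\<le>degree p. h (Suc s) * coeff p s)"
    by (subst sum.atMost_Suc_shift) (simp add: coeff_monom_mult)
  finally show ?thesis by (simp add: wt_def)
qed

lemmas wt_X' = wt_X[simplified]

lemma wt_sum_h: "finite B \<Longrightarrow> wt (\<lambda>s. \<Sum>b\<in>B. h b s) p = (\<Sum>b\<in>B. wt (h b) p)"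
  by (simp add: wt_def sum_distrib_right sum.swap[of _ B])

lemma hockey0: "(\<Sum>j<K. j choose s) = K choose Suc s"
  by (induction K) auto

lemma hockey: "c \<le> m \<Longrightarrow> (\<Sum>b\<in>{c..<m}. (m - Suc b) choose s) = (m - c) choose Suc s"
proof -
  assume c: "c \<le> m"
  have "(\<Sum>b\<in>{c..<m}. (m - Suc b) choose s) = (\<Sum>j<m-c. j choose s)"
    by (rule sum.reindex_bij_witness[where i="\<lambda>j. m - 1 - j" and j="\<lambda>b. m - 1 - b"]) auto
  then show ?thesis by (simp add: hockey0)
qed

lemma sum_split2: "(\<Sum>l<2*(m::nat). f l) = (\<Sum>b<m. f (2*b) + f (2*b+1))"
  by (induction m) (simp_all add: sum.distrib add_ac)

lemma Valph_len[simp]: "length (Valph m) = 2*m" by (simp add: Valph_def)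
lemma Valph_nth: "l < 2*m \<Longrightarrow> Valph m ! l = odd l" by (simp add: Valph_def)

lemma cnt_formula:
  "l < 2*m \<Longrightarrow> cnt (Valph m) d l = wt (\<lambda>s. (m - 1 - l div 2) choose s) (Qp (odd l) d)"
proof (induction d arbitrary: l)
  case Nil
  then show ?case by simp
next
  case (Cons g d)
  define a where "a = l div 2"
  define s where "s = odd l"
  have l_eq: "l = 2*a + (if s then 1 else 0)" unfolding a_def s_def by presburger
  have am: "a < m" using Cons.prems l_eq by auto
  define F where "F l' = (if vstep (Valph m) g l l' then cnt (Valph m) d l' else 0)" for l'
  have "cnt (Valph m) (g # d) l = (\<Sum>l'<2*m. F l')" by (simp add: F_def)
  also have "\<dots> = (\<Sum>b<m. F (2*b) + F (2*b+1))" by (rule sum_split2)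
  also have "\<dots> = (\<Sum>b\<in>{..<a} \<union> {a} \<union> {Suc a..<m}. F (2*b) + F (2*b+1))"
    using am by (intro sum.cong) auto
  also have "\<dots> = (\<Sum>b\<in>{..<a}. F (2*b) + F (2*b+1)) + (F (2*a) + F (2*a+1))
       + (\<Sum>b\<in>{Suc a..<m}. F (2*b) + F (2*b+1))"
    by (subst sum.union_disjoint; auto)+
  also have "(\<Sum>b\<in>{..<a}. F (2*b) + F (2*b+1)) = 0"
    by (intro sum.neutral) (auto simp: F_def vstep_def l_eq)
  also have "F (2*a) = (if lc s False g then wt (\<lambda>t. (m - 1 - a) choose t) (Qp False d) else 0)"
    using am Cons.IH[of "2*a"] by (auto simp: F_def vstep_def lc_def l_eq Valph_nth)
  also have "F (2*a+1) = (if lc s True g then wt (\<lambda>t. (m - 1 - a) choose t) (Qp True d) else 0)"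
    using am Cons.IH[of "2*a+1"] by (auto simp: F_def vstep_def lc_def l_eq Valph_nth)
  also have "(\<Sum>b\<in>{Suc a..<m}. F (2*b) + F (2*b+1))
      = (\<Sum>b\<in>{Suc a..<m}. wt (\<lambda>t. (m - 1 - b) choose t) (Qp False d)
                         + wt (\<lambda>t. (m - 1 - b) choose t) (Qp True d))"
  proof (intro sum.cong refl)
    fix b assume b: "b \<in> {Suc a..<m}"
    then have "F (2*b) = wt (\<lambda>t. (m - 1 - b) choose t) (Qp False d)"
      using Cons.IH[of "2*b"] by (auto simp: F_def vstep_def l_eq)
    moreover have "F (2*b+1) = wt (\<lambda>t. (m - 1 - b) choose t) (Qp True d)"
      using b Cons.IH[of "2*b+1"] by (auto simp: F_def vstep_def l_eq)
    ultimately show "F (2*b) + F (2*b+1) = wt (\<lambda>t. (m - 1 - b) choose t) (Qp False d)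
                         + wt (\<lambda>t. (m - 1 - b) choose t) (Qp True d)" by simp
  qed
  also have "\<dots> = wt (\<lambda>t. (m - 1 - a) choose Suc t) (Qp False d)
                  + wt (\<lambda>t. (m - 1 - a) choose Suc t) (Qp True d)"
    using am by (simp add: sum.distrib wt_sum_h[symmetric] hockey[of "Suc a" m])
  finally show ?case
    by (simp add: a_def[symmetric] s_def[symmetric] wt_add wt_X')
qed

lemma cnt_total:
  "(\<Sum>l<2*m. cnt (Valph m) d l) = wt (\<lambda>t. m choose Suc t) (QF d)"
proof -
  have "(\<Sum>l<2*m. cnt (Valph m) d l) = (\<Sum>b<m. cnt (Valph m) d (2*b) + cnt (Valph m) d (2*b+1))"
    by (rule sum_split2)
  also have "\<dots> = (\<Sum>b\<in>{0..<m}. wt (\<lambda>t. (m - 1 - b) choose t) (Qp False d)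
                         + wt (\<lambda>t. (m - 1 - b) choose t) (Qp True d))"
    by (intro sum.cong) (auto simp: cnt_formula)
  also have "\<dots> = wt (\<lambda>t. m choose Suc t) (QF d)"
    by (simp add: sum.distrib wt_sum_h[symmetric] hockey[of 0 m] QF_def wt_add)
  finally show ?thesis .
qed

lemma cnt_not: "cnt (map Not L) (map Not d) l = cnt L d l"
  by (induction d arbitrary: l) (auto simp: vstep_def intro!: sum.cong)

definition Sp :: "nat poly" where "Sp = 1 + X + X"
definition Ap :: "nat poly" where "Ap = (1 + X) + (1 + X) + (1 + X) + (1 + X)"

lemma QF_Nil: "QF [] = 1 + 1" by (simp add: QF_def)
lemma QF_F: "QF [False] = (1 + 1) * Sp"
  by (simp add: QF_def Sp_def lc_def algebra_simps) (simp add: add.assoc[symmetric])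
lemma QF_T: "QF (True # r) = Sp * QF r" by (simp add: QF_def Sp_def lc_def algebra_simps)
lemma QF_FF: "QF (False # False # r) = Sp * QF (False # r)"
  by (simp add: QF_def Sp_def lc_def algebra_simps)
lemma QF_FT: "QF (False # True # r) = X * Ap * QF r"
  by (simp add: QF_def Ap_def lc_def algebra_simps)

lemma QF_single: "QF [x] = (1 + 1) * Sp"
  by (cases x) (simp_all add: QF_F QF_T QF_Nil mult.commute)
lemma QF_xF: "QF (x # False # r) = Sp * QF (False # r)"
  by (cases x) (simp_all add: QF_T QF_FF)

lemma QF_closed: "QF d = X ^ pc d * ((1 + 1) * Ap ^ pc d * Sp ^ (length d - 2 * pc d)) \<and> 2 * pc d \<le> length d"
  by (induction d rule: pc.induct) (auto simp: QF_FT QF_T QF_single QF_xF QF_Nil algebra_simps Suc_diff_le)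


lemma wt_Xpow: "wt h (X ^ p * R) = wt (\<lambda>s. h (s + p)) R"
proof (induction p arbitrary: h)
  case 0 then show ?case by simp
next
  case (Suc p)
  have "wt h (X ^ Suc p * R) = wt h (X * (X ^ p * R))" by (simp add: mult.assoc)
  also have "\<dots> = wt (\<lambda>s. h (Suc s)) (X ^ p * R)" by (rule wt_X)
  also have "\<dots> = wt (\<lambda>s. h (s + Suc p)) R" using Suc by simp
  finally show ?case .
qed

definition Rp :: "nat \<Rightarrow> nat \<Rightarrow> nat poly" where
  "Rp r p = (1 + 1) * Ap ^ p * Sp ^ (r - 2 * p)"

definition Gf :: "nat \<Rightarrow> nat \<Rightarrow> nat \<Rightarrow> nat" where
  "Gf r k p = wt (\<lambda>t. k choose Suc t) (X ^ p * Rp r p)"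

lemma cnt_total_closed: "(\<Sum>l<2*m. cnt (Valph m) d l) = Gf (length d) m (pc d)"
  unfolding cnt_total Gf_def Rp_def using QF_closed[of d] by simp

lemma Gf_zero: "k \<le> p \<Longrightarrow> Gf r k p = 0"
  unfolding Gf_def wt_Xpow by (simp add: wt_def)

lemma Gf_pos: "1 \<le> k \<Longrightarrow> Gf r k (k - 1) > 0"
proof -
  assume k: "1 \<le> k"
  let ?R = "Rp r (k - 1)"
  have c0: "coeff ?R 0 > 0"
    by (simp add: poly_0_coeff_0[symmetric] Rp_def Ap_def Sp_def poly_monom)
  have "Gf r k (k - 1) = wt (\<lambda>s. k choose Suc (s + (k - 1))) ?R"
    unfolding Gf_def wt_Xpow ..
  also have "\<dots> = (\<Sum>s\<le>degree ?R. (k choose Suc (s + (k - 1))) * coeff ?R s)"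
    by (simp add: wt_def)
  also have "\<dots> \<ge> (k choose Suc (0 + (k - 1))) * coeff ?R 0"
    by (rule member_le_sum) auto
  finally show ?thesis using k c0 by simp
qed

lemma pc_cons2: "pc (x # y # r) = (if \<not> x \<and> y then 1 else 0) + pc (y # r)"
  by (cases x; cases y) auto

lemma pc_card: "pc xs = card {j. Suc j < length xs \<and> \<not> xs ! j \<and> xs ! Suc j}"
proof (induction xs rule: induct_list012)
  case 1 then show ?case by simp
next
  case (2 x) then show ?case by (cases x) auto
next
  case (3 x y r)
  let ?P = "\<lambda>xs j. Suc j < length xs \<and> \<not> xs ! j \<and> xs ! Suc j"
  have split: "{j. ?P (x # y # r) j} = (if \<not> x \<and> y then {0} else {}) \<union> Suc ` {j. ?P (y # r) j}"
  proof (rule set_eqI)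
    fix j show "j \<in> {j. ?P (x # y # r) j} \<longleftrightarrow> j \<in> (if \<not> x \<and> y then {0} else {}) \<union> Suc ` {j. ?P (y # r) j}"
    proof (cases j)
      case 0 then show ?thesis by auto
    next
      case (Suc j') then show ?thesis by (auto simp: image_iff)
    qed
  qed
  have "card {j. ?P (x # y # r) j} = (if \<not> x \<and> y then 1 else 0) + card {j. ?P (y # r) j}"
    unfolding split by (subst card_Un_disjoint) (auto simp: card_image)
  then show ?case using 3 pc_cons2 by simp
qed

lemma pc_snoc_F: "pc (zs @ [False]) = pc zs"
  by (induction zs rule: induct_list012) (auto simp: pc_cons2 split: if_splits)

lemma pc_not_identity:
  "ys \<noteq> [] \<Longrightarrow> pc ys + (if hd ys \<and> \<not> last ys then 1 else 0)
     = pc (map Not ys) + (if \<not> hd ys \<and> last ys then 1 else 0)"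
proof (induction ys rule: induct_list012)
  case 1 then show ?case by simp
next
  case (2 x) then show ?case by (cases x) auto
next
  case (3 x y r)
  then show ?case by (cases x; cases y) (auto simp: pc_cons2)
qed

lemma pc_ext: "pc (False # xs @ [True]) = Suc (pc (map Not xs))"
proof -
  have "pc (False # xs @ [True]) = pc (map Not (False # xs @ [True])) + 1"
    using pc_not_identity[of "False # xs @ [True]"] by simp
  also have "pc (map Not (False # xs @ [True])) = pc (map Not xs)"
    by (simp add: pc_snoc_F)
  finally show ?thesis by simp
qed

lemma pc_le: "2 * pc xs \<le> length xs"
  using QF_closed by blast

definition dl :: "nat \<Rightarrow> (nat \<Rightarrow> nat) \<Rightarrow> bool list" where
  "dl n \<pi> = map (\<lambda>t. \<pi> (Suc t) < \<pi> t) [1..<n]"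

definition el :: "nat \<Rightarrow> (nat \<Rightarrow> nat) \<Rightarrow> bool list" where
  "el n \<pi> = map (\<lambda>t. pval n \<pi> (Suc t) < pval n \<pi> t) [0..<Suc n]"

lemma perms_in: "\<pi> \<in> perms n \<Longrightarrow> t \<in> {1..n} \<Longrightarrow> \<pi> t \<in> {1..n}"
  unfolding perms_def using permutes_in_image by fastforce

lemma perms_inj: "\<pi> \<in> perms n \<Longrightarrow> s \<in> {1..n} \<Longrightarrow> t \<in> {1..n} \<Longrightarrow> \<pi> s = \<pi> t \<Longrightarrow> s = t"
  unfolding perms_def by (metis mem_Collect_eq permutes_inj injD)

lemma length_dl[simp]: "length (dl n \<pi>) = n - 1" by (simp add: dl_def)

lemma interior_pc:
  assumes p: "\<pi> \<in> perms n"
  shows "interior_peaks n \<pi> = pc (dl n \<pi>)"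
proof -
  let ?d = "dl n \<pi>"
  have "{i. is_peak n \<pi> i \<and> 1 < i \<and> i < n} = (\<lambda>j. j + 2) ` {j. Suc j < length ?d \<and> \<not> ?d ! j \<and> ?d ! Suc j}"
  proof (rule set_eqI, rule iffI)
    fix i assume i: "i \<in> {i. is_peak n \<pi> i \<and> 1 < i \<and> i < n}"
    then have ne: "\<pi> (i - 1) \<noteq> \<pi> i"
    proof -
      have "i - 1 \<in> {1..n}" "i \<in> {1..n}" "i - 1 \<noteq> i" using i by auto
      then show ?thesis using perms_inj[OF p] by blast
    qed
    have "i - 2 \<in> {j. Suc j < length ?d \<and> \<not> ?d ! j \<and> ?d ! Suc j}"
    proof -
      have i2: "1 \<le> i - 1" "i - 1 \<le> n" "i - 2 + 1 = i - 1" "i - 2 + 2 = i" using i by auto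
      show ?thesis
        using i ne i2 by (auto simp: is_peak_def pval_def dl_def)
    qed
    moreover have "i = i - 2 + 2" using i by auto
    ultimately show "i \<in> (\<lambda>j. j + 2) ` {j. Suc j < length ?d \<and> \<not> ?d ! j \<and> ?d ! Suc j}" by blast
  next
    fix i assume "i \<in> (\<lambda>j. j + 2) ` {j. Suc j < length ?d \<and> \<not> ?d ! j \<and> ?d ! Suc j}"
    then obtain j where j: "i = j + 2" "Suc j < n - 1" "\<not> ?d ! j" "?d ! Suc j" by auto
    then have ne: "\<pi> (j + 1) \<noteq> \<pi> (j + 2)"
    proof -
      have "j + 1 \<in> {1..n}" "j + 2 \<in> {1..n}" "j + 1 \<noteq> j + 2" using j by auto
      then show ?thesis using perms_inj[OF p] by blast
    qed
    show "i \<in> {i. is_peak n \<pi> i \<and> 1 < i \<and> i < n}"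
      using j ne by (auto simp: is_peak_def pval_def dl_def)
  qed
  then show ?thesis
    unfolding interior_peaks_def pc_card[of ?d] by (simp add: card_image inj_on_def)
qed

lemma exterior_pc_el:
  assumes p: "\<pi> \<in> perms n"
  shows "exterior_peaks n \<pi> = pc (el n \<pi>)"
proof -
  let ?d = "el n \<pi>"
  have len: "length ?d = Suc n" by (simp add: el_def)
  have ne: "pval n \<pi> (i - 1) \<noteq> pval n \<pi> i" if "1 \<le> i" "i \<le> n" for i
  proof (cases "i = 1")
    case True then show ?thesis using perms_in[OF p, of i] that by (auto simp: pval_def)
  next
    case False then show ?thesis using perms_inj[OF p, of "i-1" i] that by (auto simp: pval_def)
  qed
  have "{i. is_peak n \<pi> i} = Suc ` {j. Suc j < length ?d \<and> \<not> ?d ! j \<and> ?d ! Suc j}"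
  proof (rule set_eqI, rule iffI)
    fix i assume i: "i \<in> {i. is_peak n \<pi> i}"
    then have i1: "1 \<le> i" "i \<le> n" by (auto simp: is_peak_def)
    have "i - 1 \<in> {j. Suc j < length ?d \<and> \<not> ?d ! j \<and> ?d ! Suc j}"
      using i i1 ne[OF i1] unfolding len by (auto simp: is_peak_def el_def nth_append simp del: upt_Suc)
    moreover have "i = Suc (i - 1)" using i1 by auto
    ultimately show "i \<in> Suc ` {j. Suc j < length ?d \<and> \<not> ?d ! j \<and> ?d ! Suc j}" by blast
  next
    fix i assume "i \<in> Suc ` {j. Suc j < length ?d \<and> \<not> ?d ! j \<and> ?d ! Suc j}"
    then obtain j where j: "i = Suc j" "Suc j < Suc n" "\<not> ?d ! j" "?d ! Suc j" using len by auto
    have ne': "pval n \<pi> j \<noteq> pval n \<pi> (Suc j)" using ne[of "Suc j"] j by auto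
    show "i \<in> {i. is_peak n \<pi> i}"
      using j ne' by (auto simp: is_peak_def el_def simp del: upt_Suc)
  qed
  then show ?thesis
    unfolding exterior_peaks_def pc_card[of ?d] by (simp add: card_image)
qed

lemma el_dl:
  assumes p: "\<pi> \<in> perms n" and n: "1 \<le> n"
  shows "el n \<pi> = False # dl n \<pi> @ [True]"
proof (rule nth_equalityI)
  show "length (el n \<pi>) = length (False # dl n \<pi> @ [True])" using n by (simp add: el_def)
next
  fix t assume "t < length (el n \<pi>)"
  then have t: "t \<le> n" by (simp add: el_def)
  show "el n \<pi> ! t = (False # dl n \<pi> @ [True]) ! t"
  proof (cases "t = 0")
    case True then show ?thesis using n by (simp add: el_def pval_def nth_append del: upt_Suc)
  next
    case False
    then obtain u where u: "t = Suc u" by (cases t) auto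
    show ?thesis
    proof (cases "t = n")
      case True
      then show ?thesis using u perms_in[OF p, of n] n
        by (simp add: el_def pval_def nth_append dl_def del: upt_Suc)
    next
      case False
      then have "u < n - 1" "Suc (Suc u) \<le> n" using u t by arith+
      then show ?thesis using u t n
        by (simp add: el_def pval_def nth_append dl_def del: upt_Suc)
    qed
  qed
qed

lemma exterior_pc:
  assumes p: "\<pi> \<in> perms n" and n: "1 \<le> n"
  shows "exterior_peaks n \<pi> = Suc (pc (map Not (dl n \<pi>)))"
  using exterior_pc_el[OF p] el_dl[OF p n] pc_ext by simp

definition key :: "bool list \<Rightarrow> (nat \<Rightarrow> nat) \<Rightarrow> nat \<Rightarrow> nat \<times> int" where
  "key L w i = (w i, if L ! (w i) then int i else - int i)"

definition rk :: "nat \<Rightarrow> bool list \<Rightarrow> (nat \<Rightarrow> nat) \<Rightarrow> nat \<Rightarrow> nat" where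
  "rk n L w i = (if i \<in> {1..n} then card {j \<in> {1..n}. key L w j \<le> key L w i} else i)"

definition words :: "nat \<Rightarrow> nat \<Rightarrow> (nat \<Rightarrow> nat) set" where
  "words n M = PiE {1..n} (\<lambda>_. {..<M})"

lemma key_inj: "key L w i = key L w j \<Longrightarrow> i = j"
  by (auto simp: key_def split: if_splits)

lemma rk_out: "i \<notin> {1..n} \<Longrightarrow> rk n L w i = i"
  unfolding rk_def by (rule if_not_P)

lemma rk_in: "i \<in> {1..n} \<Longrightarrow> rk n L w i = card {j \<in> {1..n}. key L w j \<le> key L w i}"
  unfolding rk_def by (rule if_P)

lemma rk_mono:
  assumes "i \<in> {1..n}" "j \<in> {1..n}"
  shows "rk n L w j \<le> rk n L w i \<longleftrightarrow> key L w j \<le> key L w i"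
proof
  assume "key L w j \<le> key L w i"
  then have "{k \<in> {1..n}. key L w k \<le> key L w j} \<subseteq> {k \<in> {1..n}. key L w k \<le> key L w i}"
    by auto
  then show "rk n L w j \<le> rk n L w i"
    unfolding rk_in[OF assms(1)] rk_in[OF assms(2)] by (intro card_mono) auto
next
  assume le: "rk n L w j \<le> rk n L w i"
  show "key L w j \<le> key L w i"
  proof (rule ccontr)
    assume "\<not> key L w j \<le> key L w i"
    then have lt: "key L w i < key L w j" by simp
    have jin: "j \<in> {k \<in> {1..n}. key L w k \<le> key L w j}" "j \<notin> {k \<in> {1..n}. key L w k \<le> key L w i}"
      using lt assms by auto
    have "{k \<in> {1..n}. key L w k \<le> key L w i} \<subseteq> {k \<in> {1..n}. key L w k \<le> key L w j}"
      using lt by auto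
    then have "{k \<in> {1..n}. key L w k \<le> key L w i} \<subset> {k \<in> {1..n}. key L w k \<le> key L w j}"
      using jin by blast
    then have "card {k \<in> {1..n}. key L w k \<le> key L w i} < card {k \<in> {1..n}. key L w k \<le> key L w j}"
      by (intro psubset_card_mono) auto
    then show False using le unfolding rk_in[OF assms(1)] rk_in[OF assms(2)] by linarith
  qed
qed

lemma rk_range: "i \<in> {1..n} \<Longrightarrow> rk n L w i \<in> {1..n}"
proof -
  assume i: "i \<in> {1..n}"
  let ?S = "{j \<in> {1..n}. key L w j \<le> key L w i}"
  have fin: "finite ?S" by simp
  have "i \<in> ?S" using i by simp
  then have "?S \<noteq> {}" by blast
  then have c1: "card ?S > 0" using fin card_gt_0_iff by blast
  have "card ?S \<le> card {1..n}" by (rule card_mono) auto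
  then have c2: "card ?S \<le> n" by simp
  show ?thesis unfolding rk_in[OF i] using c1 c2 by simp
qed

lemma rk_permutes: "rk n L w permutes {1..n}"
proof (rule inj_imp_permutes)
  show "inj_on (rk n L w) {1..n}"
  proof (rule inj_onI)
    fix i j assume ij: "i \<in> {1..n}" "j \<in> {1..n}" "rk n L w i = rk n L w j"
    have a: "key L w j \<le> key L w i" using rk_mono[OF ij(1) ij(2), of L w] ij(3) by simp
    have b: "key L w i \<le> key L w j" using rk_mono[OF ij(2) ij(1), of L w] ij(3) by simp
    have "key L w i = key L w j" by (rule antisym[OF b a])
    then show "i = j" by (rule key_inj)
  qed
next
  show "\<And>x. x \<in> {1..n} \<Longrightarrow> rk n L w x \<in> {1..n}" by (rule rk_range)
next
  show "\<And>i. i \<notin> {1..n} \<Longrightarrow> rk n L w i = i" by (rule rk_out)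
next
  show "finite {1..n::nat}" by simp
qed

lemma rk_unique:
  assumes f: "f permutes {1..n}"
    and mono: "\<And>i j. i \<in> {1..n} \<Longrightarrow> j \<in> {1..n} \<Longrightarrow> key L w j \<le> key L w i \<Longrightarrow> f j \<le> f i"
  shows "f = rk n L w"
proof (rule ext)
  fix i
  show "f i = rk n L w i"
  proof (cases "i \<in> {1..n}")
    case False
    have "f i = i" using f False by (simp add: permutes_not_in)
    moreover have "rk n L w i = i" using False by (rule rk_out)
    ultimately show ?thesis by simp
  next
    case True
    have inj: "inj_on f {1..n}" using f permutes_inj_on by blast
    have eq: "{j \<in> {1..n}. key L w j \<le> key L w i} = {j \<in> {1..n}. f j \<le> f i}"
    proof (rule set_eqI, rule iffI)
      fix j assume "j \<in> {j \<in> {1..n}. key L w j \<le> key L w i}"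
      then show "j \<in> {j \<in> {1..n}. f j \<le> f i}" using mono True by auto
    next
      fix j assume j: "j \<in> {j \<in> {1..n}. f j \<le> f i}"
      show "j \<in> {j \<in> {1..n}. key L w j \<le> key L w i}"
      proof (rule ccontr)
        assume "j \<notin> {j \<in> {1..n}. key L w j \<le> key L w i}"
        then have "key L w i \<le> key L w j" "i \<noteq> j" using j by auto
        then have "f i \<le> f j" using mono j True by auto
        then have "f i = f j" using j by auto
        then show False using inj j True \<open>i \<noteq> j\<close> by (auto dest: inj_onD)
      qed
    qed
    have img: "f ` {j \<in> {1..n}. f j \<le> f i} = {m \<in> {1..n}. m \<le> f i}"
    proof
      show "f ` {j \<in> {1..n}. f j \<le> f i} \<subseteq> {m \<in> {1..n}. m \<le> f i}"
        using f permutes_in_image by fastforce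
    next
      show "{m \<in> {1..n}. m \<le> f i} \<subseteq> f ` {j \<in> {1..n}. f j \<le> f i}"
      proof
        fix m assume m: "m \<in> {m \<in> {1..n}. m \<le> f i}"
        then have "m \<in> f ` {1..n}" using permutes_image[OF f] by simp
        then obtain j where "j \<in> {1..n}" "f j = m" by auto
        then show "m \<in> f ` {j \<in> {1..n}. f j \<le> f i}" using m by auto
      qed
    qed
    have fi: "f i \<in> {1..n}" using f True permutes_in_image by fastforce
    have "card {m \<in> {1..n}. m \<le> f i} = f i"
    proof -
      have "{m \<in> {1..n}. m \<le> f i} = {1..f i}" using fi by auto
      then show ?thesis by simp
    qed
    moreover have "card (f ` {j \<in> {1..n}. f j \<le> f i}) = card {j \<in> {1..n}. f j \<le> f i}"
      by (rule card_image, rule inj_on_subset[OF inj]) auto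
    ultimately have c: "card {j \<in> {1..n}. f j \<le> f i} = f i"
      using img by simp
    show ?thesis unfolding rk_in[OF True] eq c ..
  qed
qed

lemma rk_comp_id_iff:
  assumes p: "\<pi> permutes {1..n}"
  shows "rk n L w \<circ> \<pi> = id \<longleftrightarrow> (\<forall>t. 1 \<le> t \<and> t < n \<longrightarrow> key L w (\<pi> t) < key L w (\<pi> (Suc t)))"
proof
  assume h: "rk n L w \<circ> \<pi> = id"
  show "\<forall>t. 1 \<le> t \<and> t < n \<longrightarrow> key L w (\<pi> t) < key L w (\<pi> (Suc t))"
  proof (intro allI impI)
    fix t assume t: "1 \<le> t \<and> t < n"
    have r1: "rk n L w (\<pi> t) = t" "rk n L w (\<pi> (Suc t)) = Suc t"
      using fun_cong[OF h, of t] fun_cong[OF h, of "Suc t"] by auto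
    have in1: "\<pi> t \<in> {1..n}" "\<pi> (Suc t) \<in> {1..n}" using t permutes_in_image[OF p] by auto
    have "\<not> key L w (\<pi> (Suc t)) \<le> key L w (\<pi> t)"
      using rk_mono[OF in1(1) in1(2), of L w] r1 by simp
    then show "key L w (\<pi> t) < key L w (\<pi> (Suc t))" by simp
  qed
next
  assume h: "\<forall>t. 1 \<le> t \<and> t < n \<longrightarrow> key L w (\<pi> t) < key L w (\<pi> (Suc t))"
  have strict: "key L w (\<pi> s) < key L w (\<pi> t)" if "1 \<le> s" "s < t" "t \<le> n" for s t
    using that
  proof (induction t rule: less_induct)
    case (less t)
    then obtain t' where t': "t = Suc t'" by (cases t) auto
    show ?case
    proof (cases "s = t'")
      case True then show ?thesis using h less.prems t' by auto
    next
      case False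
      then have "key L w (\<pi> s) < key L w (\<pi> t')" using less t' by auto
      also have "\<dots> < key L w (\<pi> t)" using h less.prems t' False by auto
      finally show ?thesis .
    qed
  qed
  have ip: "inv \<pi> permutes {1..n}" using permutes_inv[OF p] .
  have "inv \<pi> = rk n L w"
  proof (rule rk_unique[OF ip])
    fix i j assume ij: "i \<in> {1..n}" "j \<in> {1..n}" "key L w j \<le> key L w i"
    define a where "a = inv \<pi> j"
    define b where "b = inv \<pi> i"
    have ab: "a \<in> {1..n}" "b \<in> {1..n}" "\<pi> a = j" "\<pi> b = i"
      unfolding a_def b_def using ij permutes_in_image[OF ip] permutes_inverses(1)[OF p] by auto
    show "inv \<pi> j \<le> inv \<pi> i"
    proof (rule ccontr)
      assume "\<not> inv \<pi> j \<le> inv \<pi> i"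
      then have "b < a" unfolding a_def b_def by simp
      then have "key L w (\<pi> b) < key L w (\<pi> a)" using strict ab by auto
      then show False using ab ij by auto
    qed
  qed
  then show "rk n L w \<circ> \<pi> = id" using permutes_inv_o[OF p] by metis
qed

definition vl :: "bool list \<Rightarrow> bool list \<Rightarrow> nat list \<Rightarrow> bool" where
  "vl L d cs \<longleftrightarrow> (\<forall>j < length d. vstep L (d ! j) (cs ! j) (cs ! Suc j))"

definition Sset :: "bool list \<Rightarrow> bool list \<Rightarrow> nat \<Rightarrow> nat list set" where
  "Sset L d l = {cs. length cs = Suc (length d) \<and> set cs \<subseteq> {..<length L} \<and> vl L d cs \<and> hd cs = l}"

lemma finite_Sset: "finite (Sset L d l)"
proof (rule finite_subset)
  show "Sset L d l \<subseteq> {cs. set cs \<subseteq> {..<length L} \<and> length cs = Suc (length d)}"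
    by (auto simp: Sset_def)
qed (rule finite_lists_length_eq, simp)

lemma vl_Cons: "cs \<noteq> [] \<Longrightarrow> vl L (g # d) (a # cs) \<longleftrightarrow> vstep L g a (hd cs) \<and> vl L d cs"
  unfolding vl_def by (simp add: All_less_Suc2 hd_conv_nth)

lemma Sset_Cons: "Sset L (g # d) l = (\<lambda>cs. l # cs) ` (\<Union>l'\<in>{l'. l' < length L \<and> vstep L g l l'}. Sset L d l')"
proof (rule set_eqI, rule iffI)
  fix cs assume cs: "cs \<in> Sset L (g # d) l"
  have lc: "length cs = Suc (Suc (length d))" "hd cs = l" using cs by (auto simp: Sset_def)
  then obtain a cs' where "cs = a # cs'" by (cases cs) auto
  then have cs': "cs = l # cs'" "cs' \<noteq> []" using lc by auto
  have "cs' \<in> Sset L d (hd cs')" "hd cs' < length L" "vstep L g l (hd cs')"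
    using cs cs' by (auto simp: Sset_def vl_Cons hd_in_set[OF cs'(2)] subset_iff)
  then show "cs \<in> (\<lambda>cs. l # cs) ` (\<Union>l'\<in>{l'. l' < length L \<and> vstep L g l l'}. Sset L d l')"
    using cs' by blast
next
  fix cs assume "cs \<in> (\<lambda>cs. l # cs) ` (\<Union>l'\<in>{l'. l' < length L \<and> vstep L g l l'}. Sset L d l')"
  then obtain l' cs' where h: "cs = l # cs'" "l' < length L" "vstep L g l l'" "cs' \<in> Sset L d l'"
    by blast
  then have ne: "cs' \<noteq> []" by (auto simp: Sset_def)
  have "l < length L \<or> True" by simp
  show "cs \<in> Sset L (g # d) l"
  proof -
    have "l \<le> l'" using h(3) by (auto simp: vstep_def)
    then have "l < length L" using h(2) by simp
    then show ?thesis using h ne by (auto simp: Sset_def vl_Cons)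
  qed
qed

lemma card_Sset: "l < length L \<Longrightarrow> card (Sset L d l) = cnt L d l"
proof (induction d arbitrary: l)
  case Nil
  have "Sset L [] l = {[l]}"
  proof (rule set_eqI, rule iffI)
    fix cs assume "cs \<in> Sset L [] l"
    then show "cs \<in> {[l]}" by (cases cs) (auto simp: Sset_def)
  qed (use Nil in \<open>auto simp: Sset_def vl_def\<close>)
  then show ?case by simp
next
  case (Cons g d)
  have "card (Sset L (g # d) l) = card (\<Union>l'\<in>{l'. l' < length L \<and> vstep L g l l'}. Sset L d l')"
    unfolding Sset_Cons by (rule card_image) (simp add: inj_on_def)
  also have "\<dots> = (\<Sum>l'\<in>{l'. l' < length L \<and> vstep L g l l'}. card (Sset L d l'))"
    apply (rule card_UN_disjoint)
      apply simp
     apply (simp add: finite_Sset)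
    apply (auto simp: Sset_def)
    done
  also have "\<dots> = (\<Sum>l'\<in>{l'. l' < length L \<and> vstep L g l l'}. cnt L d l')"
    using Cons.IH by (intro sum.cong) auto
  also have "\<dots> = (\<Sum>l'<length L. if vstep L g l l' then cnt L d l' else 0)"
  proof -
    have "{l'. l' < length L \<and> vstep L g l l'} = {l' \<in> {..<length L}. vstep L g l l'}" by auto
    then show ?thesis using sum.inter_filter[of "{..<length L}" "cnt L d" "vstep L g l"] by simp
  qed
  finally show ?case by simp
qed

lemma card_vl_total:
  "card {cs. length cs = Suc (length d) \<and> set cs \<subseteq> {..<length L} \<and> vl L d cs}
     = (\<Sum>l<length L. cnt L d l)"
proof -
  have eq: "{cs. length cs = Suc (length d) \<and> set cs \<subseteq> {..<length L} \<and> vl L d cs}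
      = (\<Union>l\<in>{..<length L}. Sset L d l)"
  proof (rule set_eqI, rule iffI)
    fix cs assume cs: "cs \<in> {cs. length cs = Suc (length d) \<and> set cs \<subseteq> {..<length L} \<and> vl L d cs}"
    then have "cs \<noteq> []" by auto
    then have "hd cs < length L" using cs hd_in_set by blast
    then show "cs \<in> (\<Union>l\<in>{..<length L}. Sset L d l)" using cs by (auto simp: Sset_def)
  qed (auto simp: Sset_def)
  have "card (\<Union>l\<in>{..<length L}. Sset L d l) = (\<Sum>l<length L. card (Sset L d l))"
    apply (rule card_UN_disjoint)
      apply simp
     apply (simp add: finite_Sset)
    apply (auto simp: Sset_def)
    done
  also have "\<dots> = (\<Sum>l<length L. cnt L d l)"
    by (rule sum.cong) (simp_all add: card_Sset)
  finally show ?thesis unfolding eq .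
qed

definition validc :: "nat \<Rightarrow> bool list \<Rightarrow> (nat \<Rightarrow> nat) \<Rightarrow> (nat \<Rightarrow> nat) \<Rightarrow> bool" where
  "validc n L \<pi> c \<longleftrightarrow> (\<forall>t. 1 \<le> t \<and> t < n \<longrightarrow> vstep L (\<pi> (Suc t) < \<pi> t) (c t) (c (Suc t)))"

lemma validc_vl:
  "validc n L \<pi> c \<longleftrightarrow> vl L (dl n \<pi>) (map c [1..<Suc n])"
proof -
  have "vl L (dl n \<pi>) (map c [1..<Suc n]) \<longleftrightarrow>
      (\<forall>j < n - 1. vstep L (\<pi> (Suc (Suc j)) < \<pi> (Suc j)) (c (Suc j)) (c (Suc (Suc j))))"
    unfolding vl_def dl_def by (auto simp: nth_append simp del: upt_Suc)
  also have "\<dots> \<longleftrightarrow> validc n L \<pi> c"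
    unfolding validc_def
  proof safe
    fix t assume h: "\<forall>j<n - 1. vstep L (\<pi> (Suc (Suc j)) < \<pi> (Suc j)) (c (Suc j)) (c (Suc (Suc j)))"
      and t: "1 \<le> t" "t < n"
    then show "vstep L (\<pi> (Suc t) < \<pi> t) (c t) (c (Suc t))"
      using h[rule_format, of "t - 1"] by (cases t) auto
  qed auto
  finally show ?thesis ..
qed

lemma perms_permutes: "\<pi> \<in> perms n \<Longrightarrow> \<pi> permutes {1..n}"
  by (simp add: perms_def)

lemma key_step_iff:
  assumes p: "\<pi> permutes {1..n}" and t: "1 \<le> t" "t < n"
  shows "key L w (\<pi> t) < key L w (\<pi> (Suc t)) \<longleftrightarrow> vstep L (\<pi> (Suc t) < \<pi> t) (w (\<pi> t)) (w (\<pi> (Suc t)))"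
proof -
  have "\<pi> t \<noteq> \<pi> (Suc t)" using p t by (metis n_not_Suc_n permutes_inj injD)
  then show ?thesis by (auto simp: key_def vstep_def)
qed

lemma words_comp:
  assumes p: "\<pi> permutes {1..n}" and w: "w \<in> words n M"
  shows "w \<circ> \<pi> \<in> words n M"
  using w permutes_in_image[OF p] permutes_not_in[OF p]
  unfolding words_def PiE_iff extensional_def by auto

lemma count_valid:
  assumes p: "\<pi> \<in> perms n"
  shows "card {w \<in> words n (length L). rk n L w \<circ> \<pi> = id} = card {c \<in> words n (length L). validc n L \<pi> c}"
proof -
  have pp: "\<pi> permutes {1..n}" using p by (simp add: perms_def)
  have ip: "inv \<pi> permutes {1..n}" using permutes_inv[OF pp] .
  have iff: "rk n L w \<circ> \<pi> = id \<longleftrightarrow> validc n L \<pi> (w \<circ> \<pi>)" for w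
    unfolding rk_comp_id_iff[OF pp] validc_def using key_step_iff[OF pp] by auto
  show ?thesis
  proof (rule bij_betw_same_card[of "\<lambda>w. w \<circ> \<pi>"], rule bij_betw_byWitness[where f'="\<lambda>c. c \<circ> inv \<pi>"])
    show "\<forall>a\<in>{w \<in> words n (length L). rk n L w \<circ> \<pi> = id}. a \<circ> \<pi> \<circ> inv \<pi> = a"
      using permutes_inv_o[OF pp] by (simp add: comp_assoc)
    show "\<forall>a'\<in>{c \<in> words n (length L). validc n L \<pi> c}. a' \<circ> inv \<pi> \<circ> \<pi> = a'"
      using permutes_inv_o[OF pp] by (simp add: comp_assoc)
    show "(\<lambda>w. w \<circ> \<pi>) ` {w \<in> words n (length L). rk n L w \<circ> \<pi> = id} \<subseteq> {c \<in> words n (length L). validc n L \<pi> c}"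
      using iff words_comp[OF pp] by auto
    show "(\<lambda>c. c \<circ> inv \<pi>) ` {c \<in> words n (length L). validc n L \<pi> c} \<subseteq> {w \<in> words n (length L). rk n L w \<circ> \<pi> = id}"
    proof
      fix w assume "w \<in> (\<lambda>c. c \<circ> inv \<pi>) ` {c \<in> words n (length L). validc n L \<pi> c}"
      then obtain c where c: "c \<in> words n (length L)" "validc n L \<pi> c" "w = c \<circ> inv \<pi>" by auto
      have "w \<circ> \<pi> = c" using c(3) permutes_inv_o[OF pp] by (simp add: comp_assoc)
      then show "w \<in> {w \<in> words n (length L). rk n L w \<circ> \<pi> = id}"
        using iff[of w] c words_comp[OF ip c(1)] by auto
    qed
  qed
qed

lemma count_lists:
  assumes n: "1 \<le> n"
  shows "card {c \<in> words n (length L). validc n L \<pi> c} = (\<Sum>l<length L. cnt L (dl n \<pi>) l)"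
proof -
  let ?M = "length L"
  let ?f = "\<lambda>c. map c [1..<Suc n]"
  let ?g = "\<lambda>cs i. if i \<in> {1..n} then cs ! (i - 1) else undefined"
  have len: "Suc (length (dl n \<pi>)) = n" using n by simp
  have "card {c \<in> words n ?M. validc n L \<pi> c}
      = card {cs. length cs = Suc (length (dl n \<pi>)) \<and> set cs \<subseteq> {..<?M} \<and> vl L (dl n \<pi>) cs}"
  proof (rule bij_betw_same_card[of ?f], rule bij_betw_byWitness[where f'="?g"])
    show "\<forall>a\<in>{c \<in> words n ?M. validc n L \<pi> c}. ?g (?f a) = a"
    proof
      fix c assume "c \<in> {c \<in> words n ?M. validc n L \<pi> c}"
      then have "c \<in> extensional {1..n}" by (simp add: words_def PiE_iff)
      then show "?g (?f c) = c"
        by (auto simp: fun_eq_iff extensional_def nth_append simp del: upt_Suc)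
    qed
    show "\<forall>a'\<in>{cs. length cs = Suc (length (dl n \<pi>)) \<and> set cs \<subseteq> {..<?M} \<and> vl L (dl n \<pi>) cs}. ?f (?g a') = a'"
      using len by (auto intro!: nth_equalityI simp del: upt_Suc)
    show "?f ` {c \<in> words n ?M. validc n L \<pi> c}
        \<subseteq> {cs. length cs = Suc (length (dl n \<pi>)) \<and> set cs \<subseteq> {..<?M} \<and> vl L (dl n \<pi>) cs}"
      using len by (auto simp: validc_vl words_def PiE_iff simp del: upt_Suc)
    show "?g ` {cs. length cs = Suc (length (dl n \<pi>)) \<and> set cs \<subseteq> {..<?M} \<and> vl L (dl n \<pi>) cs}
        \<subseteq> {c \<in> words n ?M. validc n L \<pi> c}"
    proof
      fix c assume "c \<in> ?g ` {cs. length cs = Suc (length (dl n \<pi>)) \<and> set cs \<subseteq> {..<?M} \<and> vl L (dl n \<pi>) cs}"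
      then obtain cs where cs: "length cs = n" "set cs \<subseteq> {..<?M}" "vl L (dl n \<pi>) cs" "c = ?g cs"
        using len by auto
      have m: "map c [1..<Suc n] = cs" using cs by (auto intro!: nth_equalityI simp del: upt_Suc)
      have w: "c \<in> words n ?M"
        using cs unfolding words_def PiE_iff extensional_def
        by (auto simp: subset_iff)
      show "c \<in> {c \<in> words n ?M. validc n L \<pi> c}"
        using w cs(3) m by (simp add: validc_vl)
    qed
  qed
  also have "\<dots> = (\<Sum>l<?M. cnt L (dl n \<pi>) l)" by (rule card_vl_total)
  finally show ?thesis .
qed

definition code :: "bool list \<Rightarrow> bool list \<Rightarrow> nat \<Rightarrow> nat \<Rightarrow> nat" where
  "code L M a b = a * length M + (if L ! a then b else length M - 1 - b)"

definition decb :: "bool list \<Rightarrow> bool list \<Rightarrow> nat \<Rightarrow> nat" where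
  "decb L M c = (if L ! (c div length M) then c mod length M else length M - 1 - c mod length M)"

definition tens :: "bool list \<Rightarrow> bool list \<Rightarrow> bool list" where
  "tens L M = map (\<lambda>c. if L ! (c div length M) then M ! (c mod length M)
                       else \<not> M ! (length M - 1 - c mod length M)) [0..<length L * length M]"

lemma length_tens[simp]: "length (tens L M) = length L * length M"
  by (simp add: tens_def)

context
  fixes L M :: "bool list"
  assumes Mpos: "length M > 0"
begin

lemma code_div: "b < length M \<Longrightarrow> code L M a b div length M = a"
  using Mpos by (auto simp: code_def)

lemma code_mod: "b < length M \<Longrightarrow> code L M a b mod length M = (if L ! a then b else length M - 1 - b)"
  using Mpos by (auto simp: code_def)

lemma code_lt: "a < length L \<Longrightarrow> b < length M \<Longrightarrow> code L M a b < length L * length M"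
proof -
  assume a: "a < length L" and b: "b < length M"
  have "code L M a b < a * length M + length M" using b by (auto simp: code_def)
  also have "\<dots> = Suc a * length M" by simp
  also have "\<dots> \<le> length L * length M" using a by (intro mult_right_mono) auto
  finally show ?thesis .
qed

lemma decb_code: "b < length M \<Longrightarrow> decb L M (code L M a b) = b"
  by (auto simp: decb_def code_div code_mod)

lemma decb_lt: "decb L M c < length M"
  using Mpos by (auto simp: decb_def)

lemma code_decb: "code L M (c div length M) (decb L M c) = c"
proof -
  have "c mod length M < length M" using Mpos by simp
  then show ?thesis by (auto simp: code_def decb_def)
qed

lemma tens_code: "a < length L \<Longrightarrow> b < length M \<Longrightarrow> tens L M ! code L M a b = (L ! a \<longleftrightarrow> M ! b)"
  using code_lt[of a b] by (auto simp: tens_def code_div code_mod)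

end

definition enc :: "nat \<Rightarrow> bool list \<Rightarrow> bool list \<Rightarrow> (nat \<Rightarrow> nat) \<Rightarrow> (nat \<Rightarrow> nat) \<Rightarrow> nat \<Rightarrow> nat" where
  "enc n L M v x = (\<lambda>i. if i \<in> {1..n} then code L M (x (rk n M v i)) (v i) else undefined)"

lemma words_in: "w \<in> words n m \<Longrightarrow> i \<in> {1..n} \<Longrightarrow> w i < m"
  by (auto simp: words_def PiE_iff)

lemma words_out: "w \<in> words n m \<Longrightarrow> i \<notin> {1..n} \<Longrightarrow> w i = undefined"
  by (auto simp: words_def PiE_iff extensional_def)

lemma wordsI: "(\<And>i. i \<in> {1..n} \<Longrightarrow> w i < m) \<Longrightarrow> (\<And>i. i \<notin> {1..n} \<Longrightarrow> w i = undefined) \<Longrightarrow> w \<in> words n m"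
  by (auto simp: words_def PiE_iff extensional_def)

lemma key_enc:
  assumes Mpos: "length M > 0"
    and v: "v \<in> words n (length M)" and x: "x \<in> words n (length L)"
    and i: "i \<in> {1..n}" and j: "j \<in> {1..n}"
    and H: "key (tens L M) (enc n L M v x) j \<le> key (tens L M) (enc n L M v x) i"
  shows "key L x (rk n M v j) \<le> key L x (rk n M v i)"
proof -
  let ?rv = "rk n M v"
  define aj where "aj = x (?rv j)"
  define ai where "ai = x (?rv i)"
  define bj where "bj = v j"
  define bi where "bi = v i"
  have rvi: "?rv i \<in> {1..n}" "?rv j \<in> {1..n}" using rk_range i j by auto
  have ab: "aj < length L" "ai < length L" "bj < length M" "bi < length M"
    unfolding aj_def ai_def bj_def bi_def using words_in[OF x] words_in[OF v] rvi i j by auto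
  have uj: "enc n L M v x j = code L M aj bj" and ui: "enc n L M v x i = code L M ai bi"
    using i j by (auto simp: enc_def aj_def bj_def ai_def bi_def)
  have Tj: "tens L M ! code L M aj bj = (L ! aj \<longleftrightarrow> M ! bj)" using tens_code[OF Mpos ab(1) ab(3)] .
  have Ti: "tens L M ! code L M ai bi = (L ! ai \<longleftrightarrow> M ! bi)" using tens_code[OF Mpos ab(2) ab(4)] .
  have Hc0: "code L M aj bj < code L M ai bi \<or> (code L M aj bj \<le> code L M ai bi \<and>
      (if (L ! aj \<longleftrightarrow> M ! bj) then int j else - int j) \<le> (if (L ! ai \<longleftrightarrow> M ! bi) then int i else - int i))"
    using H unfolding key_def uj ui Tj Ti by (simp only: less_eq_prod_simp)
  have Hc: "code L M aj bj < code L M ai bi \<or> (code L M aj bj = code L M ai bi \<and>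
      (if (L ! aj \<longleftrightarrow> M ! bj) then int j else - int j) \<le> (if (L ! ai \<longleftrightarrow> M ! bi) then int i else - int i))"
    using Hc0 by auto
  have rmono: "?rv j \<le> ?rv i \<longleftrightarrow> key M v j \<le> key M v i" using rk_mono[OF i j] .
  have rmono': "?rv i \<le> ?rv j \<longleftrightarrow> key M v i \<le> key M v j" using rk_mono[OF j i] .
  have kv: "key M v j = (bj, if M ! bj then int j else - int j)" "key M v i = (bi, if M ! bi then int i else - int i)"
    by (simp_all add: key_def bj_def bi_def)
  have dj: "code L M aj bj div length M = aj" "code L M ai bi div length M = ai"
    using code_div[OF Mpos] ab by auto
  show ?thesis
  proof (cases "aj = ai")
    case False
    have "code L M aj bj \<le> code L M ai bi" using Hc by auto
    then have "code L M aj bj div length M \<le> code L M ai bi div length M" by (rule div_le_mono)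
    then have "aj < ai" using dj False by simp
    then show ?thesis by (simp add: key_def aj_def ai_def)
  next
    case True
    show ?thesis
    proof (cases "L ! ai")
      case Lt: True
      have "key M v j \<le> key M v i"
        using Hc True Lt unfolding kv by (auto simp: code_def)
      then have "?rv j \<le> ?rv i" using rmono by simp
      then show ?thesis using True Lt by (simp add: key_def aj_def ai_def)
    next
      case Lf: False
      have "key M v i \<le> key M v j"
        using Hc True Lf ab unfolding kv by (auto simp: code_def)
      then have "?rv i \<le> ?rv j" using rmono' by simp
      then show ?thesis using True Lf by (simp add: key_def aj_def ai_def)
    qed
  qed
qed

lemma rk_enc:
  assumes Mpos: "length M > 0"
    and v: "v \<in> words n (length M)" and x: "x \<in> words n (length L)"
  shows "rk n (tens L M) (enc n L M v x) = rk n L x \<circ> rk n M v"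
proof (rule sym, rule rk_unique)
  show "rk n L x \<circ> rk n M v permutes {1..n}"
    by (rule permutes_compose[OF rk_permutes rk_permutes])
next
  fix i j assume i: "i \<in> {1..n}" and j: "j \<in> {1..n}"
    and H: "key (tens L M) (enc n L M v x) j \<le> key (tens L M) (enc n L M v x) i"
  have "key L x (rk n M v j) \<le> key L x (rk n M v i)" by (rule key_enc[OF Mpos v x i j H])
  then show "(rk n L x \<circ> rk n M v) j \<le> (rk n L x \<circ> rk n M v) i"
    using rk_mono[of "rk n M v i" n "rk n M v j" L x] rk_range i j by auto
qed

definition decv :: "nat \<Rightarrow> bool list \<Rightarrow> bool list \<Rightarrow> (nat \<Rightarrow> nat) \<Rightarrow> nat \<Rightarrow> nat" where
  "decv n L M u = (\<lambda>i. if i \<in> {1..n} then decb L M (u i) else undefined)"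

definition decx :: "nat \<Rightarrow> bool list \<Rightarrow> bool list \<Rightarrow> (nat \<Rightarrow> nat) \<Rightarrow> nat \<Rightarrow> nat" where
  "decx n L M u = (\<lambda>j. if j \<in> {1..n} then u (inv (rk n M (decv n L M u)) j) div length M else undefined)"

lemma enc_words:
  assumes Mpos: "length M > 0" and v: "v \<in> words n (length M)" and x: "x \<in> words n (length L)"
  shows "enc n L M v x \<in> words n (length L * length M)"
proof (rule wordsI)
  fix i assume i: "i \<in> {1..n}"
  have "rk n M v i \<in> {1..n}" using rk_range i by auto
  then show "enc n L M v x i < length L * length M"
    using i words_in[OF x] words_in[OF v i] code_lt[OF Mpos] by (auto simp: enc_def)
qed (auto simp: enc_def)

lemma enc_bij:
  assumes Mpos: "length M > 0"
  shows "bij_betw (\<lambda>(v, x). enc n L M v x) (words n (length M) \<times> words n (length L))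
           (words n (length L * length M))"
proof (rule bij_betw_byWitness[where f'="\<lambda>u. (decv n L M u, decx n L M u)"])
  show "\<forall>a\<in>words n (length M) \<times> words n (length L).
          (decv n L M ((\<lambda>(v, x). enc n L M v x) a), decx n L M ((\<lambda>(v, x). enc n L M v x) a)) = a"
  proof
    fix p assume "p \<in> words n (length M) \<times> words n (length L)"
    then obtain v x where p: "p = (v, x)" and v: "v \<in> words n (length M)" and x: "x \<in> words n (length L)"
      by auto
    have dv: "decv n L M (enc n L M v x) = v"
    proof (rule ext)
      fix i show "decv n L M (enc n L M v x) i = v i"
      proof (cases "i \<in> {1..n}")
        case True
        then show ?thesis using decb_code[OF Mpos] words_in[OF v True] by (simp add: decv_def enc_def)
      next
        case False then show ?thesis using words_out[OF v False] by (auto simp: decv_def)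
      qed
    qed
    have dx: "decx n L M (enc n L M v x) = x"
    proof (rule ext)
      fix j show "decx n L M (enc n L M v x) j = x j"
      proof (cases "j \<in> {1..n}")
        case True
        let ?k = "inv (rk n M v) j"
        have k: "?k \<in> {1..n}" using True permutes_in_image[OF permutes_inv[OF rk_permutes]] by blast
        have rk: "rk n M v ?k = j" using permutes_inverses(1)[OF rk_permutes] .
        have xj: "x j < length L" using words_in[OF x True] .
        have "decx n L M (enc n L M v x) j = enc n L M v x ?k div length M"
          using True by (simp add: decx_def dv)
        also have "enc n L M v x ?k = code L M (x j) (v ?k)"
          using k rk by (simp add: enc_def)
        also have "code L M (x j) (v ?k) div length M = x j"
          using code_div[OF Mpos] words_in[OF v k] by simp
        finally show ?thesis .
      next
        case False then show ?thesis using words_out[OF x False] by (auto simp: decx_def)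
      qed
    qed
    show "(decv n L M ((\<lambda>(v, x). enc n L M v x) p), decx n L M ((\<lambda>(v, x). enc n L M v x) p)) = p"
      using dv dx p by simp
  qed
next
  show "\<forall>u\<in>words n (length L * length M).
          (\<lambda>(v, x). enc n L M v x) (decv n L M u, decx n L M u) = u"
  proof
    fix u assume u: "u \<in> words n (length L * length M)"
    show "(\<lambda>(v, x). enc n L M v x) (decv n L M u, decx n L M u) = u"
    proof (rule ext, simp)
      fix i show "enc n L M (decv n L M u) (decx n L M u) i = u i"
      proof (cases "i \<in> {1..n}")
        case True
        let ?r = "rk n M (decv n L M u)"
        have ri: "?r i \<in> {1..n}" using rk_range True by blast
        have "inv ?r (?r i) = i" using permutes_inverses(2)[OF rk_permutes] .
        then have "decx n L M u (?r i) = u i div length M" using ri by (simp add: decx_def)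
        then show ?thesis using True code_decb[OF Mpos] by (simp add: enc_def decv_def)
      next
        case False then show ?thesis using words_out[OF u False] by (auto simp: enc_def)
      qed
    qed
  qed
next
  show "(\<lambda>(v, x). enc n L M v x) ` (words n (length M) \<times> words n (length L)) \<subseteq> words n (length L * length M)"
    using enc_words[OF Mpos] by auto
next
  show "(\<lambda>u. (decv n L M u, decx n L M u)) ` words n (length L * length M)
          \<subseteq> words n (length M) \<times> words n (length L)"
  proof (rule image_subsetI)
    fix u assume u: "u \<in> words n (length L * length M)"
    have d1: "decv n L M u \<in> words n (length M)"
      by (rule wordsI) (auto simp: decv_def decb_lt[OF Mpos])
    have d2: "decx n L M u \<in> words n (length L)"
    proof (rule wordsI)
      fix j assume j: "j \<in> {1..n}"
      let ?k = "inv (rk n M (decv n L M u)) j"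
      have k: "?k \<in> {1..n}" using j permutes_in_image[OF permutes_inv[OF rk_permutes]] by blast
      have "u ?k < length L * length M" using words_in[OF u k] .
      then have "u ?k div length M < length L" using Mpos by (simp add: less_mult_imp_div_less)
      then show "decx n L M u j < length L" using j by (simp add: decx_def)
    qed (auto simp: decx_def)
    show "(decv n L M u, decx n L M u) \<in> words n (length M) \<times> words n (length L)"
      using d1 d2 by simp
  qed
qed

lemma bij_card_filter:
  assumes bij: "bij_betw f A B" and PQ: "\<And>a. a \<in> A \<Longrightarrow> P (f a) \<longleftrightarrow> Q a"
  shows "card {a \<in> A. Q a} = card {b \<in> B. P b}"
proof (rule bij_betw_same_card[of f])
  have injA: "inj_on f A" using bij by (simp add: bij_betw_def)
  have imA: "f ` A = B" using bij by (simp add: bij_betw_def)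
  have inj: "inj_on f {a \<in> A. Q a}" by (rule inj_on_subset[OF injA]) blast
  have "f ` {a \<in> A. Q a} = {b \<in> B. P b}"
  proof
    show "f ` {a \<in> A. Q a} \<subseteq> {b \<in> B. P b}"
    proof
      fix b assume "b \<in> f ` {a \<in> A. Q a}"
      then obtain a where a: "a \<in> A" "Q a" "b = f a" by blast
      then show "b \<in> {b \<in> B. P b}" using imA PQ[OF a(1)] by blast
    qed
    show "{b \<in> B. P b} \<subseteq> f ` {a \<in> A. Q a}"
    proof
      fix b assume b: "b \<in> {b \<in> B. P b}"
      then have "b \<in> f ` A" using imA by simp
      then obtain a where a: "a \<in> A" "b = f a" by blast
      then show "b \<in> f ` {a \<in> A. Q a}" using b PQ[OF a(1)] by blast
    qed
  qed
  then show "bij_betw f {a \<in> A. Q a} {b \<in> B. P b}" using inj by (simp add: bij_betw_def)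
qed

definition psi :: "nat \<Rightarrow> bool list \<Rightarrow> (nat \<Rightarrow> nat) \<Rightarrow> rat" where
  "psi n L = (\<lambda>\<pi>. if \<pi> \<in> perms n then of_nat (card {w \<in> words n (length L). rk n L w \<circ> \<pi> = id}) else 0)"

lemma finite_words: "finite (words n m)"
  by (simp add: words_def finite_PiE)

lemma perms_finite: "finite (perms n)"
  by (simp add: perms_def finite_permutations)

lemma inv_rk_perms: "inv (rk n L w) \<in> perms n"
  unfolding perms_def using permutes_inv[OF rk_permutes] by blast

lemma inv_rk_iff: "\<sigma> \<in> perms n \<Longrightarrow> inv (rk n L w) = \<sigma> \<longleftrightarrow> rk n L w \<circ> \<sigma> = id"
proof -
  assume s: "\<sigma> \<in> perms n"
  have r: "rk n L w permutes {1..n}" by (rule rk_permutes)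
  show ?thesis
  proof
    assume h: "inv (rk n L w) = \<sigma>"
    have "rk n L w \<circ> inv (rk n L w) = id" by (rule permutes_inv_o(1)[OF r])
    then show "rk n L w \<circ> \<sigma> = id" unfolding h .
  next
    assume h: "rk n L w \<circ> \<sigma> = id"
    have "inv (rk n L w) = inv (rk n L w) \<circ> (rk n L w \<circ> \<sigma>)" using h by simp
    also have "\<dots> = \<sigma>" using permutes_inv_o(2)[OF r] by (simp add: comp_assoc[symmetric])
    finally show "inv (rk n L w) = \<sigma>" .
  qed
qed

lemma product:
  assumes Lpos: "length L > 0" and Mpos: "length M > 0"
  shows "gmult n (psi n M) (psi n L) = psi n (tens L M)"
proof (rule ext)
  fix \<pi>
  show "gmult n (psi n M) (psi n L) \<pi> = psi n (tens L M) \<pi>"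
  proof (cases "\<pi> \<in> perms n")
    case False then show ?thesis by (simp add: gmult_def psi_def)
  next
    case True
    have pp: "\<pi> permutes {1..n}" using True by (simp add: perms_def)
    let ?WM = "words n (length M)" and ?WL = "words n (length L)"
    define B where "B \<sigma> = card {x \<in> ?WL. rk n L x \<circ> (inv \<sigma> \<circ> \<pi>) = id}" for \<sigma>
    have invp: "inv \<sigma> \<circ> \<pi> \<in> perms n" if "\<sigma> \<in> perms n" for \<sigma>
      using that pp by (simp add: perms_def permutes_compose permutes_inv)
    have "gmult n (psi n M) (psi n L) \<pi>
        = (\<Sum>\<sigma>\<in>perms n. of_nat (card {v \<in> ?WM. rk n M v \<circ> \<sigma> = id} * B \<sigma>))"
      using True invp by (simp add: gmult_def psi_def B_def)
    also have "\<dots> = of_nat (\<Sum>\<sigma>\<in>perms n. card {v \<in> ?WM. rk n M v \<circ> \<sigma> = id} * B \<sigma>)"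
      by simp
    also have "(\<Sum>\<sigma>\<in>perms n. card {v \<in> ?WM. rk n M v \<circ> \<sigma> = id} * B \<sigma>)
        = (\<Sum>\<sigma>\<in>perms n. \<Sum>v\<in>{v \<in> ?WM. inv (rk n M v) = \<sigma>}. B (inv (rk n M v)))"
    proof (rule sum.cong[OF refl])
      fix \<sigma> assume s: "\<sigma> \<in> perms n"
      have e: "{v \<in> ?WM. inv (rk n M v) = \<sigma>} = {v \<in> ?WM. rk n M v \<circ> \<sigma> = id}"
        using inv_rk_iff[OF s] by auto
      have "(\<Sum>v\<in>{v \<in> ?WM. inv (rk n M v) = \<sigma>}. B (inv (rk n M v)))
          = (\<Sum>v\<in>{v \<in> ?WM. inv (rk n M v) = \<sigma>}. B \<sigma>)"
        by (rule sum.cong) auto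
      also have "\<dots> = card {v \<in> ?WM. rk n M v \<circ> \<sigma> = id} * B \<sigma>"
        unfolding e by simp
      finally have "(\<Sum>v\<in>{v \<in> ?WM. inv (rk n M v) = \<sigma>}. B (inv (rk n M v)))
          = card {v \<in> ?WM. rk n M v \<circ> \<sigma> = id} * B \<sigma>" .
      then show "card {v \<in> ?WM. rk n M v \<circ> \<sigma> = id} * B \<sigma>
          = (\<Sum>v\<in>{v \<in> ?WM. inv (rk n M v) = \<sigma>}. B (inv (rk n M v)))"
        by (rule sym)
    qed
    also have "\<dots> = (\<Sum>v\<in>?WM. B (inv (rk n M v)))"
      by (rule sum.group) (auto simp: finite_words perms_finite inv_rk_perms)
    also have "\<dots> = (\<Sum>v\<in>?WM. card {x \<in> ?WL. rk n L x \<circ> rk n M v \<circ> \<pi> = id})"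
      by (rule sum.cong) (simp_all add: B_def permutes_inv_inv[OF rk_permutes] comp_assoc)
    also have "\<dots> = card (SIGMA v:?WM. {x \<in> ?WL. rk n L x \<circ> rk n M v \<circ> \<pi> = id})"
      by (rule card_SigmaI[symmetric]) (auto simp: finite_words)
    also have "(SIGMA v:?WM. {x \<in> ?WL. rk n L x \<circ> rk n M v \<circ> \<pi> = id})
        = {p \<in> ?WM \<times> ?WL. rk n L (snd p) \<circ> rk n M (fst p) \<circ> \<pi> = id}"
      by auto
    also have "card \<dots> = card {u \<in> words n (length L * length M). rk n (tens L M) u \<circ> \<pi> = id}"
    proof (rule bij_card_filter[OF enc_bij[OF Mpos]])
      fix p assume p: "p \<in> ?WM \<times> ?WL"
      then show "(rk n (tens L M) ((\<lambda>(v, x). enc n L M v x) p) \<circ> \<pi> = id)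
          = (rk n L (snd p) \<circ> rk n M (fst p) \<circ> \<pi> = id)"
        using rk_enc[OF Mpos, of "fst p" n "snd p" L] by (auto simp: case_prod_beta)
    qed
    finally show ?thesis using True by (simp add: psi_def)
  qed
qed

definition tau :: "nat \<Rightarrow> nat \<Rightarrow> nat" where
  "tau p t = (if 2 \<le> t \<and> t \<le> 2*p+1 then (if even t then t+1 else t-1) else t)"

lemma tau_tau: "tau p (tau p t) = t"
  unfolding tau_def by (auto; presburger)

lemma tau_perms: "2*p+1 \<le> n \<Longrightarrow> tau p \<in> perms n"
  unfolding perms_def
proof (safe, rule inj_imp_permutes)
  assume n: "2*p+1 \<le> n"
  show "inj_on (tau p) {1..n}" by (metis inj_onI tau_tau)
  show "\<And>x. x \<in> {1..n} \<Longrightarrow> tau p x \<in> {1..n}" using n unfolding tau_def by (auto; presburger)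
  show "\<And>i. i \<notin> {1..n} \<Longrightarrow> tau p i = i" using n by (auto simp: tau_def)
qed simp

lemma tau_dl_nth: "2*p+1 \<le> n \<Longrightarrow> j < n - 1 \<Longrightarrow> dl n (tau p) ! j = (j < 2*p \<and> odd j)"
  unfolding dl_def tau_def by (auto simp: nth_append simp del: upt_Suc; presburger)

lemma tau_ipk:
  assumes n: "2*p+1 \<le> n"
  shows "interior_peaks n (tau p) = p"
proof -
  have "interior_peaks n (tau p) = pc (dl n (tau p))" by (rule interior_pc[OF tau_perms[OF n]])
  also have "\<dots> = card {j. Suc j < length (dl n (tau p)) \<and> \<not> dl n (tau p) ! j \<and> dl n (tau p) ! Suc j}"
    by (rule pc_card)
  also have "{j. Suc j < length (dl n (tau p)) \<and> \<not> dl n (tau p) ! j \<and> dl n (tau p) ! Suc j}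
      = (\<lambda>i. 2*i) ` {..<p}"
  proof (rule set_eqI, rule iffI)
    fix j assume "j \<in> {j. Suc j < length (dl n (tau p)) \<and> \<not> dl n (tau p) ! j \<and> dl n (tau p) ! Suc j}"
    then have j: "Suc j < n - 1" "\<not> (j < 2*p \<and> odd j)" "Suc j < 2*p \<and> odd (Suc j)"
      using tau_dl_nth[OF n, of j] tau_dl_nth[OF n, of "Suc j"] by auto
    then have "even j" "j div 2 < p" by auto
    then show "j \<in> (\<lambda>i. 2*i) ` {..<p}" by (metis dvd_mult_div_cancel imageI lessThan_iff)
  next
    fix j assume "j \<in> (\<lambda>i. 2*i) ` {..<p}"
    then obtain i where i: "j = 2*i" "i < p" by auto
    then have "Suc j < n - 1" using n by auto
    then show "j \<in> {j. Suc j < length (dl n (tau p)) \<and> \<not> dl n (tau p) ! j \<and> dl n (tau p) ! Suc j}"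
      using i tau_dl_nth[OF n, of j] tau_dl_nth[OF n, of "Suc j"] by auto
  qed
  also have "card ((\<lambda>i. 2*i) ` {..<p}) = p" by (subst card_image) (auto simp: inj_on_def)
  finally show ?thesis .
qed

definition kap :: "nat \<Rightarrow> nat \<Rightarrow> nat \<Rightarrow> nat" where
  "kap n p t = (if t \<in> {1..n} then n + 1 - tau p t else t)"

lemma kap_perms:
  assumes n: "2*p+1 \<le> n"
  shows "kap n p \<in> perms n"
proof -
  define rv where "rv t = (if t \<in> {1..n} then n + 1 - t else t)" for t
  have rv: "rv permutes {1..n}"
  proof (rule inj_imp_permutes)
    show "inj_on rv {1..n}" by (auto simp: inj_on_def rv_def)
  qed (auto simp: rv_def)
  have tp: "tau p permutes {1..n}" using tau_perms[OF n] by (simp add: perms_def)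
  have "kap n p = rv \<circ> tau p"
  proof (rule ext)
    fix t show "kap n p t = (rv \<circ> tau p) t"
    proof (cases "t \<in> {1..n}")
      case True
      then have "tau p t \<in> {1..n}" using permutes_in_image[OF tp] by blast
      then show ?thesis using True by (simp add: kap_def rv_def)
    next
      case False
      then have "tau p t = t" using permutes_not_in[OF tp] by blast
      then show ?thesis using False by (auto simp: kap_def rv_def)
    qed
  qed
  then show ?thesis using permutes_compose[OF tp rv] by (simp add: perms_def)
qed

lemma kap_dl:
  assumes n: "2*p+1 \<le> n"
  shows "dl n (kap n p) = map Not (dl n (tau p))"
proof (rule nth_equalityI)
  show "length (dl n (kap n p)) = length (map Not (dl n (tau p)))" by simp
next
  fix j assume j: "j < length (dl n (kap n p))"
  then have j': "j < n - 1" by simp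
  have tp: "tau p \<in> perms n" using tau_perms[OF n] .
  have r: "tau p (Suc j) \<in> {1..n}" "tau p (Suc (Suc j)) \<in> {1..n}"
    using perms_in[OF tp] j' by auto
  have jj: "Suc j \<in> {1..n}" "Suc (Suc j) \<in> {1..n}" "Suc j \<noteq> Suc (Suc j)" using j' by auto
  have ne: "tau p (Suc j) \<noteq> tau p (Suc (Suc j))"
    using perms_inj[OF tp jj(1) jj(2)] jj(3) by blast
  have "dl n (kap n p) ! j = (kap n p (Suc (Suc j)) < kap n p (Suc j))"
    using j' by (simp add: dl_def nth_append del: upt_Suc)
  also have "\<dots> = (n + 1 - tau p (Suc (Suc j)) < n + 1 - tau p (Suc j))"
    using j' by (simp add: kap_def)
  also have "\<dots> = (\<not> tau p (Suc (Suc j)) < tau p (Suc j))"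
    using r ne by auto
  also have "\<dots> = map Not (dl n (tau p)) ! j"
    using j' by (simp add: dl_def nth_append del: upt_Suc)
  finally show "dl n (kap n p) ! j = map Not (dl n (tau p)) ! j" .
qed

lemma kap_epk:
  assumes n: "2*p+1 \<le> n"
  shows "exterior_peaks n (kap n p) = Suc p"
proof -
  have "exterior_peaks n (kap n p) = Suc (pc (map Not (dl n (kap n p))))"
    using exterior_pc[OF kap_perms[OF n]] n by simp
  also have "map Not (dl n (kap n p)) = dl n (tau p)" using kap_dl[OF n] by (simp add: comp_def)
  also have "pc (dl n (tau p)) = p" using tau_ipk[OF n] interior_pc[OF tau_perms[OF n]] by simp
  finally show ?thesis .
qed

definition Wal :: "nat \<Rightarrow> bool list" where
  "Wal m = map even [0..<2*m]"

lemma Wal_not: "Wal k = map Not (Valph k)"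
  by (simp add: Wal_def Valph_def)

lemma even_mod2l: "even (c mod (2 * l)) \<longleftrightarrow> even (c::nat)"
proof -
  have "c mod (2 * l) mod 2 = c mod 2" by (simp add: mod_mod_cancel)
  then show ?thesis by (simp add: even_iff_mod_2_eq_zero)
qed

lemma par_aux: "(x::nat) < 2*l \<Longrightarrow> odd (2*l - 1 - x) \<longleftrightarrow> even x"
  by presburger

lemma tens_nth: "c < length L * length M \<Longrightarrow> tens L M ! c =
   (if L ! (c div length M) then M ! (c mod length M) else \<not> M ! (length M - 1 - c mod length M))"
  unfolding tens_def by (simp del: upt_Suc)

lemma tens_V:
  assumes l: "1 \<le> l"
  shows "tens (Valph k) (Valph l) = Valph (2*k*l)"
proof (rule nth_equalityI)
  show "length (tens (Valph k) (Valph l)) = length (Valph (2*k*l))" by simp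
next
  fix c assume "c < length (tens (Valph k) (Valph l))"
  then have c: "c < 2*k*(2*l)" by simp
  have a: "c div (2*l) < 2*k" using c by (simp add: less_mult_imp_div_less mult.commute)
  have r: "c mod (2*l) < 2*l" using l by simp
  have r2: "2*l - 1 - c mod (2*l) < 2*l" using l by simp
  have par: "odd (2*l - 1 - c mod (2*l)) \<longleftrightarrow> even (c mod (2*l))" using par_aux[OF r] .
  have t: "tens (Valph k) (Valph l) ! c = (if Valph k ! (c div (2*l)) then Valph l ! (c mod (2*l))
      else \<not> Valph l ! (2*l - 1 - c mod (2*l)))"
    using tens_nth[of c "Valph k" "Valph l"] c by (simp add: mult.commute)
  have c2: "c < 2 * (2*k*l)" using c by (simp add: mult_ac)
  show "tens (Valph k) (Valph l) ! c = Valph (2*k*l) ! c"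
    unfolding t Valph_nth[OF a] Valph_nth[OF r] Valph_nth[OF r2] Valph_nth[OF c2]
    using par even_mod2l[of c l] by auto
qed

lemma tens_W:
  assumes l: "1 \<le> l"
  shows "tens (Wal k) (Wal l) = Wal (2*k*l)"
proof (rule nth_equalityI)
  show "length (tens (Wal k) (Wal l)) = length (Wal (2*k*l))" by (simp add: Wal_def)
next
  fix c assume "c < length (tens (Wal k) (Wal l))"
  then have c: "c < 2*k*(2*l)" by (simp add: Wal_def)
  have a: "c div (2*l) < 2*k" using c by (simp add: less_mult_imp_div_less mult.commute)
  have r: "c mod (2*l) < 2*l" using l by simp
  have r2: "2*l - 1 - c mod (2*l) < 2*l" using l by simp
  have par: "odd (2*l - 1 - c mod (2*l)) \<longleftrightarrow> even (c mod (2*l))" using par_aux[OF r] .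
  have Wn: "x < 2*m \<Longrightarrow> Wal m ! x = even x" for x m by (simp add: Wal_def)
  have t: "tens (Wal k) (Wal l) ! c = (if Wal k ! (c div (2*l)) then Wal l ! (c mod (2*l))
      else \<not> Wal l ! (2*l - 1 - c mod (2*l)))"
    using tens_nth[of c "Wal k" "Wal l"] c by (simp add: mult.commute Wal_def)
  have c2: "c < 2 * (2*k*l)" using c by (simp add: mult_ac)
  show "tens (Wal k) (Wal l) ! c = Wal (2*k*l) ! c"
    unfolding t Wn[OF a] Wn[OF r] Wn[OF r2] Wn[OF c2]
    using par even_mod2l[of c l] by auto
qed

lemma psi_count:
  assumes n: "1 \<le> n" and p: "\<pi> \<in> perms n"
  shows "psi n L \<pi> = of_nat (\<Sum>l<length L. cnt L (dl n \<pi>) l)"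
  using p count_valid[OF p, of L] count_lists[OF n, of L \<pi>] by (simp add: psi_def)

lemma psi_V:
  assumes n: "1 \<le> n" and p: "\<pi> \<in> perms n"
  shows "psi n (Valph k) \<pi> = of_nat (Gf (n - 1) k (interior_peaks n \<pi>))"
  using psi_count[OF n p, of "Valph k"] cnt_total_closed[of k "dl n \<pi>"] interior_pc[OF p]
  by simp

lemma psi_W:
  assumes n: "1 \<le> n" and p: "\<pi> \<in> perms n"
  shows "psi n (Wal k) \<pi> = of_nat (Gf (n - 1) k (exterior_peaks n \<pi> - 1))"
proof -
  have "(\<Sum>l<length (Wal k). cnt (Wal k) (dl n \<pi>) l) = (\<Sum>l<2*k. cnt (Valph k) (map Not (dl n \<pi>)) l)"
  proof (rule sum.cong)
    fix l
    have "cnt (Wal k) (dl n \<pi>) l = cnt (map Not (Valph k)) (map Not (map Not (dl n \<pi>))) l"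
      by (simp add: Wal_not comp_def)
    also have "\<dots> = cnt (Valph k) (map Not (dl n \<pi>)) l" by (rule cnt_not)
    finally show "cnt (Wal k) (dl n \<pi>) l = cnt (Valph k) (map Not (dl n \<pi>)) l" .
  qed (simp add: Wal_def)
  also have "\<dots> = Gf (n - 1) k (pc (map Not (dl n \<pi>)))"
    using cnt_total_closed[of k "map Not (dl n \<pi>)"] by simp
  finally show ?thesis using psi_count[OF n p, of "Wal k"] exterior_pc[OF p n] by simp
qed

theorem corollary3p2:
  fixes n :: nat
  assumes "n \<ge> 1"
  shows "comm_subalg n (peak_alg n) \<and> qdim (peak_alg n) = (n + 1) div 2 \<and>
         comm_subalg n (peak_alg_ext n) \<and> qdim (peak_alg_ext n) = (n + 1) div 2"
proof -
  have n: "1 \<le> n" using assms .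
  define m where "m = (n + 1) div 2"
  have pbound: "2 * p + 1 \<le> n" if "1 \<le> i" "i \<le> m" "p = i - 1" for i p
    using that n unfolding m_def by auto
  have mult_V: "gmult n (psi n (Valph k)) (psi n (Valph l)) = psi n (Valph (2*k*l))"
    if "1 \<le> k" "1 \<le> l" for k l
  proof -
    have "gmult n (psi n (Valph k)) (psi n (Valph l)) = psi n (tens (Valph l) (Valph k))"
      by (rule product) (use that in auto)
    also have "\<dots> = psi n (Valph (2*l*k))" using tens_V[of k l] that by simp
    finally show ?thesis by (simp add: mult_ac)
  qed
  have mult_W: "gmult n (psi n (Wal k)) (psi n (Wal l)) = psi n (Wal (2*k*l))"
    if "1 \<le> k" "1 \<le> l" for k l
  proof -
    have "gmult n (psi n (Wal k)) (psi n (Wal l)) = psi n (tens (Wal l) (Wal k))"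
      by (rule product) (use that in \<open>auto simp: Wal_def\<close>)
    also have "\<dots> = psi n (Wal (2*l*k))" using tens_W[of k l] that by simp
    finally show ?thesis by (simp add: mult_ac)
  qed
  define E where "E i = (\<lambda>\<pi>. if \<pi> \<in> perms n \<and> interior_peaks n \<pi> + 1 = i then (1::rat) else 0)" for i
  have img: "E' n ` {1..m} = E ` {1..m}"
  proof (rule image_cong[OF refl])
    fix i assume "i \<in> {1..m}"
    then show "E' n i = E i" by (auto simp: E'_def E_def fun_eq_iff)
  qed
  have int: "comm_subalg n (qspan (E ` {1..m})) \<and> qdim (qspan (E ` {1..m})) = m"
  proof (rule abstract_alg[where \<kappa>="\<lambda>\<pi>. interior_peaks n \<pi> + 1" and G="Gf (n - 1)"
        and \<Phi>="\<lambda>k. psi n (Valph k)"])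
    show "E i = (\<lambda>\<pi>. if \<pi> \<in> perms n \<and> interior_peaks n \<pi> + 1 = i then 1 else 0)" for i
      by (simp add: E_def)
    show "psi n (Valph k) = (\<lambda>\<pi>. if \<pi> \<in> perms n then of_nat (Gf (n - 1) k (interior_peaks n \<pi> + 1 - 1)) else 0)" for k
      using psi_V[OF n] by (auto simp: fun_eq_iff psi_def)
    show "1 \<le> interior_peaks n \<pi> + 1 \<and> interior_peaks n \<pi> + 1 \<le> m" if "\<pi> \<in> perms n" for \<pi>
    proof -
      have "2 * interior_peaks n \<pi> \<le> n - 1" using interior_pc[OF that] pc_le[of "dl n \<pi>"] by simp
      moreover have "\<And>x::nat. 2 * x \<le> n - 1 \<Longrightarrow> 1 \<le> x + 1 \<and> x + 1 \<le> (n + 1) div 2"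
        using n by presburger
      ultimately show ?thesis unfolding m_def by blast
    qed
    show "\<exists>\<pi>\<in>perms n. interior_peaks n \<pi> + 1 = i" if "1 \<le> i" "i \<le> m" for i
    proof -
      have b: "2 * (i - 1) + 1 \<le> n" using pbound[OF that refl] .
      show ?thesis using tau_perms[OF b] tau_ipk[OF b] that by (intro bexI[of _ "tau (i - 1)"]) auto
    qed
    show "Gf (n - 1) k j = 0" if "k \<le> j" for k j using Gf_zero[OF that] .
    show "0 < Gf (n - 1) k (k - 1)" if "1 \<le> k" for k using Gf_pos[OF that] .
    show "gmult n (psi n (Valph k)) (psi n (Valph l)) = psi n (Valph (2 * k * l))"
      if "1 \<le> k" "1 \<le> l" for k l using mult_V[OF that] .
  qed
  have ext: "comm_subalg n (qspan (Ebar' n ` {1..m})) \<and> qdim (qspan (Ebar' n ` {1..m})) = m"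
  proof (rule abstract_alg[where \<kappa>="\<lambda>\<pi>. exterior_peaks n \<pi>" and G="Gf (n - 1)"
        and \<Phi>="\<lambda>k. psi n (Wal k)"])
    show "Ebar' n i = (\<lambda>\<pi>. if \<pi> \<in> perms n \<and> exterior_peaks n \<pi> = i then 1 else 0)" for i
      by (simp add: Ebar'_def)
    show "psi n (Wal k) = (\<lambda>\<pi>. if \<pi> \<in> perms n then of_nat (Gf (n - 1) k (exterior_peaks n \<pi> - 1)) else 0)" for k
      using psi_W[OF n] by (auto simp: fun_eq_iff psi_def)
    show "1 \<le> exterior_peaks n \<pi> \<and> exterior_peaks n \<pi> \<le> m" if "\<pi> \<in> perms n" for \<pi>
    proof -
      have "2 * pc (map Not (dl n \<pi>)) \<le> n - 1" using pc_le[of "map Not (dl n \<pi>)"] by simp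
      moreover have "\<And>x::nat. 2 * x \<le> n - 1 \<Longrightarrow> 1 \<le> x + 1 \<and> x + 1 \<le> (n + 1) div 2"
        using n by presburger
      ultimately show ?thesis using exterior_pc[OF that n] unfolding m_def by simp
    qed
    show "\<exists>\<pi>\<in>perms n. exterior_peaks n \<pi> = i" if "1 \<le> i" "i \<le> m" for i
    proof -
      have b: "2 * (i - 1) + 1 \<le> n" using pbound[OF that refl] .
      show ?thesis using kap_perms[OF b] kap_epk[OF b] that by (intro bexI[of _ "kap n (i - 1)"]) auto
    qed
    show "Gf (n - 1) k j = 0" if "k \<le> j" for k j using Gf_zero[OF that] .
    show "0 < Gf (n - 1) k (k - 1)" if "1 \<le> k" for k using Gf_pos[OF that] .
    show "gmult n (psi n (Wal k)) (psi n (Wal l)) = psi n (Wal (2 * k * l))"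
      if "1 \<le> k" "1 \<le> l" for k l using mult_W[OF that] .
  qed
  show ?thesis
    using int ext img unfolding peak_alg_def peak_alg_ext_def m_def by simp
qed

end
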